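(* Let $w,\kappa>0$, $\beta,c\in\mathbb{R}$ with $c\ne0$, and let $\mathcal{V}_1,\mathcal{V}_2$ be real analytic with $\mathcal{V}_1'(r)=r+r^2+\mathscr{V}_1(r)$, $\mathcal{V}_2'(r)=\kappa r+\beta r^2+\mathscr{V}_2(r)$, $\mathscr{V}_k(r)/r^2\to0$ as $r\to0$. For $U=(p_1,p_2,\xi_1,\xi_2,P_1,P_2)\in\mathcal{X}$ set \[ J(U;\mathcal{V}_1,\mathcal{V}_2,w,c):=c^2\left(\xi_1+\frac{\xi_2}{w}\right)-\int_{-1}^0\big[\mathcal{V}_1'(P_2(s+1)-P_1(s))+\mathcal{V}_2'(P_1(s+1)-P_2(s))\big]ds . \] Then: (i) $(U,c)\mapsto J(U;\mathcal{V}_1,\mathcal{V}_2,w,c)$ is analytic on $\mathcal{X}\times\mathbb{R}$, and $DJ(U;\mathcal{V}_1,\mathcal{V}_2,w,c)F(U;\mathcal{V}_1,\mathcal{V}_2,w,c)=0$ for all $U\in\mathcal{D}$; (ii) $DJ(0;\mathcal{V}_1,\mathcal{V}_2,w,c)U=c^2\xi_1+\frac{c^2}{w}\xi_2+\int_{-1}^0(P_1(s)+\kappa P_2(s))ds-\int_0^1(\kappa P_1(s)+P_2(s))ds$; (iii) if $\mathcal{V}_1=\mathcal{V}_2=\mathcal{V}$ then $J(\mathcal{S}_MU;\mathcal{V},\mathcal{V},w,c)=J(U;\mathcal{V},\mathcal{V},w,c)$, and if $w=1$ then $J(\mathcal{S}_KU;\mathcal{V}_1,\mathcal{V}_2,1,c)=J(U;\mathcal{V}_1,\mathcal{V}_2,1,c)$,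 for all $U\in\mathcal{X}$; (iv) with $\chi_0=(1,1,0,0,1,1)$ (the last two entries being constant functions), $J(U+\mu\chi_0;\mathcal{V}_1,\mathcal{V}_2,w,c)=J(U;\mathcal{V}_1,\mathcal{V}_2,w,c)$ for all $U\in\mathcal{X}$, $\mu\in\mathbb{R}$; (v) $\mathscr{J}_wU:=\xi_1+\xi_2/w$ is a bounded linear functional on $\mathcal{X}$ and $J(U;\mathcal{V}_1,\mathcal{V}_2,w,c)-J(U;\mathcal{V}_1,\mathcal{V}_2,w,\grave c)=(c^2-\grave c^2)\mathscr{J}_wU$ for all $U\in\mathcal{X}$, $\grave c\in\mathbb{R}$.
   Context: $\mathcal{X}=\{(p_1,p_2,\xi_1,\xi_2,P_1,P_2)\in\mathbb{R}^4\times C([-1,1])\times C([-1,1]):P_1(0)=p_1,P_2(0)=p_2\}$ with the maximum norm; $\mathcal{D}=\mathcal{X}\cap(\mathbb{R}^4\times C^1([-1,1])\times C^1([-1,1]))$. For $U\in\mathcal{D}$, \[ F(U;\mathcal{V}_1,\mathcal{V}_2,w,c)=\Big(\xi_1,\ \xi_2,\ c^{-2}\mathcal{V}_1'(P_2(1)-p_1)-c^{-2}\mathcal{V}_2'(p_1-P_2(-1)),\ c^{-2}w\mathcal{V}_2'(P_1(1)-p_2)-c^{-2}w\mathcal{V}_1'(p_2-P_1(-1)),\ P_1',\ P_2'\Big). \] With $(RP)(v)=P(-v)$: $\mathcal{S}_M(p_1,p_2,\xi_1,\xi_2,P_1,P_2)=(-p_1,-p_2,\xi_1,\xi_2,-RP_1,-RP_2)$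 and $\mathcal{S}_K(p_1,p_2,\xi_1,\xi_2,P_1,P_2)=(-p_2,-p_1,\xi_2,\xi_1,-RP_2,-RP_1)$. *)

theory Defs
  imports "HOL-Analysis.Analysis"
begin

text \<open>Elements of the ambient space R^4 x C([-1,1]) x C([-1,1]) are represented as
  tuples (p1,p2,xi1,xi2,P1,P2); the functions P1,P2 are only relevant on [-1,1]
  (values outside are ignored by the norm and by all constructions).\<close>

type_synonym st = "real \<times> real \<times> real \<times> real \<times> (real \<Rightarrow> real) \<times> (real \<Rightarrow> real)"

definition st_add :: "st \<Rightarrow> st \<Rightarrow> st" where
  "st_add U V = (case U of (p1,p2,x1,x2,P1,P2) \<Rightarrow> case V of (q1,q2,y1,y2,Q1,Q2) \<Rightarrow>
     (p1+q1, p2+q2, x1+y1, x2+y2, \<lambda>s. P1 s + Q1 s, \<lambda>s. P2 s + Q2 s))"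

definition st_scale :: "real \<Rightarrow> st \<Rightarrow> st" where
  "st_scale a U = (case U of (p1,p2,x1,x2,P1,P2) \<Rightarrow>
     (a*p1, a*p2, a*x1, a*x2, \<lambda>s. a * P1 s, \<lambda>s. a * P2 s))"

definition st_zero :: st where
  "st_zero = (0, 0, 0, 0, \<lambda>_. 0, \<lambda>_. 0)"

definition st_norm :: "st \<Rightarrow> real" where
  "st_norm U = (case U of (p1,p2,x1,x2,P1,P2) \<Rightarrow>
     Max {\<bar>p1\<bar>, \<bar>p2\<bar>, \<bar>x1\<bar>, \<bar>x2\<bar>,
          Sup ((\<lambda>s. \<bar>P1 s\<bar>) ` {-1..1}), Sup ((\<lambda>s. \<bar>P2 s\<bar>) ` {-1..1})})"

definition Asp :: "st set" where
  "Asp = {(p1,p2,x1,x2,P1,P2). continuous_on {-1..1} P1 \<and> continuous_on {-1..1} P2}"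

definition Xsp :: "st set" where
  "Xsp = {(p1,p2,x1,x2,P1,P2). continuous_on {-1..1} P1 \<and> continuous_on {-1..1} P2
            \<and> P1 0 = p1 \<and> P2 0 = p2}"

definition C1_deriv :: "(real \<Rightarrow> real) \<Rightarrow> (real \<Rightarrow> real) \<Rightarrow> bool" where
  "C1_deriv P Q \<longleftrightarrow> continuous_on {-1..1} Q \<and>
     (\<forall>x\<in>{-1..1}. (P has_real_derivative Q x) (at x within {-1..1}))"

definition Dsp :: "st set" where
  "Dsp = {(p1,p2,x1,x2,P1,P2). (p1,p2,x1,x2,P1,P2) \<in> Xsp \<and>
            (\<exists>Q1. C1_deriv P1 Q1) \<and> (\<exists>Q2. C1_deriv P2 Q2)}"

text \<open>The vector field F; dV1, dV2 stand for the derivatives V1', V2', and Q1, Q2 for P1', P2'.\<close>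
definition Fvf :: "(real \<Rightarrow> real) \<Rightarrow> (real \<Rightarrow> real) \<Rightarrow> real \<Rightarrow> real \<Rightarrow> st
                   \<Rightarrow> (real \<Rightarrow> real) \<Rightarrow> (real \<Rightarrow> real) \<Rightarrow> st" where
  "Fvf dV1 dV2 w c U Q1 Q2 = (case U of (p1,p2,x1,x2,P1,P2) \<Rightarrow>
     (x1, x2,
      dV1 (P2 1 - p1) / c^2 - dV2 (p1 - P2 (-1)) / c^2,
      w * dV2 (P1 1 - p2) / c^2 - w * dV1 (p2 - P1 (-1)) / c^2,
      Q1, Q2))"

definition Jfun :: "(real \<Rightarrow> real) \<Rightarrow> (real \<Rightarrow> real) \<Rightarrow> real \<Rightarrow> real \<Rightarrow> st \<Rightarrow> real" where
  "Jfun dV1 dV2 w c U = (case U of (p1,p2,x1,x2,P1,P2) \<Rightarrow>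
     c^2 * (x1 + x2 / w)
     - integral {-1..0} (\<lambda>s. dV1 (P2 (s+1) - P1 s) + dV2 (P1 (s+1) - P2 s)))"

definition Jw :: "real \<Rightarrow> st \<Rightarrow> real" where
  "Jw w U = (case U of (p1,p2,x1,x2,P1,P2) \<Rightarrow> x1 + x2 / w)"

definition SM :: "st \<Rightarrow> st" where
  "SM U = (case U of (p1,p2,x1,x2,P1,P2) \<Rightarrow> (-p1, -p2, x1, x2, \<lambda>v. - P1 (-v), \<lambda>v. - P2 (-v)))"

definition SK :: "st \<Rightarrow> st" where
  "SK U = (case U of (p1,p2,x1,x2,P1,P2) \<Rightarrow> (-p2, -p1, x2, x1, \<lambda>v. - P2 (-v), \<lambda>v. - P1 (-v)))"

definition chi0 :: st where
  "chi0 = (1, 1, 0, 0, \<lambda>_. 1, \<lambda>_. 1)"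

definition frechet_rel :: "st set \<Rightarrow> (st \<Rightarrow> real) \<Rightarrow> st \<Rightarrow> (st \<Rightarrow> real) \<Rightarrow> bool" where
  "frechet_rel A f x L \<longleftrightarrow>
     (\<forall>u\<in>A. \<forall>v\<in>A. \<forall>a b. L (st_add (st_scale a u) (st_scale b v)) = a * L u + b * L v) \<and>
     (\<exists>K. \<forall>h\<in>A. \<bar>L h\<bar> \<le> K * st_norm h) \<and>
     (\<forall>e>0. \<exists>d>0. \<forall>h\<in>A. st_norm h < d \<longrightarrow> \<bar>f (st_add x h) - f x - L h\<bar> \<le> e * st_norm h)"

definition bounded_linear_rel :: "st set \<Rightarrow> (st \<Rightarrow> real) \<Rightarrow> bool" where
  "bounded_linear_rel A L \<longleftrightarrow>
     (\<forall>u\<in>A. \<forall>v\<in>A. \<forall>a b. L (st_add (st_scale a u) (st_scale b v)) = a * L u + b * L v) \<and>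
     (\<exists>K. \<forall>h\<in>A. \<bar>L h\<bar> \<le> K * st_norm h)"

type_synonym ext = "st \<times> real"

definition ext_add :: "ext \<Rightarrow> ext \<Rightarrow> ext" where
  "ext_add x y = (st_add (fst x) (fst y), snd x + snd y)"

definition ext_scale :: "real \<Rightarrow> ext \<Rightarrow> ext" where
  "ext_scale a x = (st_scale a (fst x), a * snd x)"

definition ext_norm :: "ext \<Rightarrow> real" where
  "ext_norm x = max (st_norm (fst x)) \<bar>snd x\<bar>"

definition multilin_rel :: "ext set \<Rightarrow> nat \<Rightarrow> ((nat \<Rightarrow> ext) \<Rightarrow> real) \<Rightarrow> real \<Rightarrow> bool" where
  "multilin_rel Y n M C \<longleftrightarrow>
     (\<forall>v w. (\<forall>i<n. v i = w i) \<longrightarrow> M v = M w) \<and>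
     (\<forall>v i a b s t. (\<forall>j<n. v j \<in> Y) \<longrightarrow> i < n \<longrightarrow> a \<in> Y \<longrightarrow> b \<in> Y \<longrightarrow>
        M (v(i := ext_add (ext_scale s a) (ext_scale t b))) = s * M (v(i := a)) + t * M (v(i := b))) \<and>
     0 \<le> C \<and>
     (\<forall>v. (\<forall>i<n. v i \<in> Y) \<longrightarrow> \<bar>M v\<bar> \<le> C * (\<Prod>i<n. ext_norm (v i)))"

definition analytic_rel :: "ext set \<Rightarrow> (ext \<Rightarrow> real) \<Rightarrow> ext set \<Rightarrow> bool" where
  "analytic_rel Y f S \<longleftrightarrow> (\<forall>x\<in>S. \<exists>r>0. \<exists>M C.
     (\<forall>n. multilin_rel Y n (M n) (C n)) \<and> summable (\<lambda>n. C n * r ^ n) \<and>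
     (\<forall>h\<in>Y. ext_norm h < r \<longrightarrow> (\<lambda>n. M n (\<lambda>_. h)) sums f (ext_add x h)))"

definition real_analytic :: "(real \<Rightarrow> real) \<Rightarrow> bool" where
  "real_analytic f \<longleftrightarrow> (\<forall>x. \<exists>r>0. \<exists>a. \<forall>y. \<bar>y - x\<bar> < r \<longrightarrow> (\<lambda>n. a n * (y - x) ^ n) sums f y)"

end

theory Submission
  imports Defs
begin

lemma ra_local:
  assumes "real_analytic f"
  shows "\<exists>r>0. \<exists>a. (\<forall>z. \<bar>z\<bar> < r \<longrightarrow> summable (\<lambda>n. a n * z^n)) \<and>
           (\<forall>y. \<bar>y - x\<bar> < r \<longrightarrow> f y = (\<Sum>n. a n * (y - x)^n))"
proof -
  obtain r a where r: "r > 0" and s: "\<And>y. \<bar>y - x\<bar> < r \<Longrightarrow> (\<lambda>n. a n * (y - x) ^ n) sums f y"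
    using assms unfolding real_analytic_def by blast
  show ?thesis
  proof (intro exI conjI allI impI)
    fix z :: real assume "\<bar>z\<bar> < r"
    then show "summable (\<lambda>n. a n * z^n)" using s[of "x+z"] by (auto simp: sums_iff)
  next
    fix y assume "\<bar>y - x\<bar> < r"
    then show "f y = (\<Sum>n. a n * (y - x)^n)" using s[of y] by (simp add: sums_iff)
  qed (use r in auto)
qed

lemma ps_deriv:
  fixes a :: "nat \<Rightarrow> real"
  assumes "\<And>z. \<bar>z\<bar> < r \<Longrightarrow> summable (\<lambda>n. a n * z^n)" "\<bar>y - x\<bar> < r"
  shows "((\<lambda>y. \<Sum>n. a n * (y - x)^n) has_real_derivative (\<Sum>n. diffs a n * (y - x)^n)) (at y)"
proof -
  have "((\<lambda>z. \<Sum>n. a n * z^n) has_field_derivative (\<Sum>n. diffs a n * (y-x)^n)) (at (y - x))"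
    using termdiffs_strong'[of r a "y - x"] assms by auto
  moreover have "((\<lambda>y. y - x) has_real_derivative 1) (at y)"
    by (auto intro!: derivative_eq_intros)
  ultimately show ?thesis using DERIV_chain2 by fastforce
qed

lemma ps_diffs_summable:
  fixes a :: "nat \<Rightarrow> real"
  assumes "\<And>z. \<bar>z\<bar> < r \<Longrightarrow> summable (\<lambda>n. a n * z^n)"
  shows "\<bar>z\<bar> < r \<Longrightarrow> summable (\<lambda>n. (diffs ^^ k) a n * z^n)"
proof (induction k arbitrary: z)
  case 0
  then show ?case using assms by simp
next
  case (Suc k)
  then show ?case using termdiff_converges[of z r "(diffs ^^ k) a"] by auto
qed

lemma real_analytic_deriv:
  assumes "real_analytic f" "\<And>y. (f has_real_derivative f' y) (at y)"
  shows "real_analytic f'"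
  unfolding real_analytic_def
proof
  fix x
  obtain r a where r: "r > 0" and sm: "\<And>z. \<bar>z\<bar> < r \<Longrightarrow> summable (\<lambda>n. a n * z^n)"
    and fe: "\<And>y. \<bar>y - x\<bar> < r \<Longrightarrow> f y = (\<Sum>n. a n * (y - x)^n)"
    using ra_local[OF assms(1), of x] by blast
  show "\<exists>r>0. \<exists>a. \<forall>y. \<bar>y - x\<bar> < r \<longrightarrow> (\<lambda>n. a n * (y - x) ^ n) sums f' y"
  proof (intro exI conjI allI impI)
    fix y assume y: "\<bar>y - x\<bar> < r"
    have d: "((\<lambda>y. \<Sum>n. a n * (y - x)^n) has_real_derivative (\<Sum>n. diffs a n * (y - x)^n)) (at y)"
      using ps_deriv[OF sm y] by blast
    have "(f has_real_derivative (\<Sum>n. diffs a n * (y - x)^n)) (at y)"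
      by (rule has_field_derivative_transform_within_open[OF d, of "ball x r"])
         (use y fe in \<open>auto simp: dist_real_def abs_minus_commute\<close>)
    then have "f' y = (\<Sum>n. diffs a n * (y - x)^n)"
      using assms(2) DERIV_unique by blast
    moreover have "summable (\<lambda>n. diffs a n * (y - x)^n)"
      using ps_diffs_summable[OF sm y, of 1] by simp
    ultimately show "(\<lambda>n. diffs a n * (y - x) ^ n) sums f' y" by (simp add: sums_iff)
  qed (use r in auto)
qed


lemma ra_derivs:
  assumes "real_analytic f"
  shows "\<exists>r>0. \<exists>a. (\<forall>z. \<bar>z\<bar> < r \<longrightarrow> summable (\<lambda>n. a n * z^n)) \<and>
     (\<forall>k y. \<bar>y - x\<bar> < r \<longrightarrow> (deriv ^^ k) f y = (\<Sum>n. (diffs ^^ k) a n * (y - x)^n)) \<and>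
     (\<forall>k y. \<bar>y - x\<bar> < r \<longrightarrow> ((deriv ^^ k) f has_real_derivative (deriv ^^ Suc k) f y) (at y))"
proof -
  obtain r a where r: "r > 0" and sm: "\<And>z. \<bar>z\<bar> < r \<Longrightarrow> summable (\<lambda>n. a n * z^n)"
    and fe: "\<And>y. \<bar>y - x\<bar> < r \<Longrightarrow> f y = (\<Sum>n. a n * (y - x)^n)"
    using ra_local[OF assms(1), of x] by blast
  have smk: "\<And>z. \<bar>z\<bar> < r \<Longrightarrow> summable (\<lambda>n. (diffs ^^ k) a n * z^n)" for k
    using ps_diffs_summable[OF sm] by blast
  have dk: "((\<lambda>y. \<Sum>n. (diffs ^^ k) a n * (y - x)^n) has_real_derivative
      (\<Sum>n. (diffs ^^ Suc k) a n * (y - x)^n)) (at y)" if "\<bar>y - x\<bar> < r" for k y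
    using ps_deriv[OF smk that, of k] by simp
  have eq: "\<forall>y. \<bar>y - x\<bar> < r \<longrightarrow> (deriv ^^ k) f y = (\<Sum>n. (diffs ^^ k) a n * (y - x)^n)" for k
  proof (induction k)
    case 0
    then show ?case using fe by simp
  next
    case (Suc k)
    show ?case
    proof (intro allI impI)
      fix y assume y: "\<bar>y - x\<bar> < r"
      have "((deriv ^^ k) f has_real_derivative (\<Sum>n. (diffs ^^ Suc k) a n * (y - x)^n)) (at y)"
        by (rule has_field_derivative_transform_within_open[OF dk[OF y], of "ball x r"])
           (use y Suc in \<open>auto simp: dist_real_def abs_minus_commute\<close>)
      then show "(deriv ^^ Suc k) f y = (\<Sum>n. (diffs ^^ Suc k) a n * (y - x)^n)"
        using DERIV_imp_deriv by fastforce
    qed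
  qed
  have der: "((deriv ^^ k) f has_real_derivative (deriv ^^ Suc k) f y) (at y)" if y: "\<bar>y - x\<bar> < r" for k y
  proof -
    have "((deriv ^^ k) f has_real_derivative (\<Sum>n. (diffs ^^ Suc k) a n * (y - x)^n)) (at y)"
      by (rule has_field_derivative_transform_within_open[OF dk[OF y], of "ball x r"])
         (use y eq in \<open>auto simp: dist_real_def abs_minus_commute\<close>)
    then show ?thesis using eq y by metis
  qed
  show ?thesis using r sm eq der by blast
qed

lemma ra_has_deriv:
  assumes "real_analytic f"
  shows "((deriv ^^ k) f has_real_derivative (deriv ^^ Suc k) f y) (at y)"
  using ra_derivs[OF assms, of y] by auto

lemma ra_cont: "real_analytic f \<Longrightarrow> continuous_on S ((deriv ^^ k) f)"
  by (meson DERIV_isCont continuous_at_imp_continuous_on ra_has_deriv)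

lemma diffs_pow: "(diffs ^^ k) (a::nat\<Rightarrow>real) n = fact (n + k) / fact n * a (n + k)"
proof (induction k arbitrary: n)
  case 0
  then show ?case by simp
next
  case (Suc k)
  have "(diffs ^^ Suc k) a n = of_nat (Suc n) * (diffs ^^ k) a (Suc n)"
    by (simp add: diffs_def)
  also have "\<dots> = of_nat (Suc n) * (fact (Suc n + k) / fact (Suc n) * a (Suc n + k))"
    using Suc by simp
  also have "\<dots> = fact (n + Suc k) / fact n * a (n + Suc k)"
  proof -
    have e: "Suc n + k = n + Suc k" by simp
    have "fact (Suc n) = of_nat (Suc n) * (fact n :: real)" by simp
    then show ?thesis unfolding e by (simp del: fact_Suc of_nat_Suc)
  qed
  finally show ?case .
qed


lemma binom_term:
  fixes d R :: real
  assumes "0 \<le> d" "0 \<le> R"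
  shows "real ((n + N) choose n) * d^n * R^N \<le> (d + R)^(n + N)"
proof -
  have "real ((n + N) choose n) * d^n * R^(n + N - n) \<le> (\<Sum>k\<le>n+N. real ((n+N) choose k) * d^k * R^(n+N-k))"
    by (rule member_le_sum) (use assms in auto)
  also have "\<dots> = (d + R)^(n + N)" by (simp add: binomial_ring)
  finally show ?thesis by simp
qed

lemma fact_ratio: "fact (n + N) / fact n / fact N = real ((n + N) choose n)"
  using binomial_fact[of n "n + N", where 'a=real] by (simp add: field_simps)

lemma ra_bound_local:
  assumes "real_analytic f"
  shows "\<exists>R>0. \<exists>S\<ge>0. \<forall>\<xi>. \<bar>\<xi> - x\<bar> \<le> R \<longrightarrow> (\<forall>N. \<bar>(deriv ^^ N) f \<xi>\<bar> / fact N * R^N \<le> S)"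
proof -
  obtain r a where r: "r > 0" and sm: "\<And>z. \<bar>z\<bar> < r \<Longrightarrow> summable (\<lambda>n. a n * z^n)"
    and eq: "\<And>k y. \<bar>y - x\<bar> < r \<Longrightarrow> (deriv ^^ k) f y = (\<Sum>n. (diffs ^^ k) a n * (y - x)^n)"
    using ra_derivs[OF assms, of x] by blast
  have smk: "\<And>z. \<bar>z\<bar> < r \<Longrightarrow> summable (\<lambda>n. (diffs ^^ k) a n * z^n)" for k
    using ps_diffs_summable[OF sm] by blast
  define R where "R = r / 3"
  define R2 where "R2 = 2 * R"
  define R3 where "R3 = 5 * r / 6"
  have R: "R > 0" "R2 > 0" "R2 < R3" "R3 < r" "R < R3" using r by (auto simp: R_def R2_def R3_def)
  have "summable (\<lambda>n. norm (a n * R2^n))"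
    by (rule powser_insidea[OF sm[of R3]]) (use R in auto)
  then have absS: "summable (\<lambda>n. \<bar>a n\<bar> * R2^n)"
    using R by (simp add: abs_mult power_abs)
  define S where "S = (\<Sum>n. \<bar>a n\<bar> * R2^n)"
  have S0: "S \<ge> 0" unfolding S_def using R by (intro suminf_nonneg absS) auto
  show ?thesis
  proof (intro exI conjI allI impI)
    fix \<xi> N assume \<xi>: "\<bar>\<xi> - x\<bar> \<le> R"
    define z where "z = \<xi> - x"
    have z: "\<bar>z\<bar> \<le> R" "\<bar>z\<bar> < R3" using \<xi> R by (auto simp: z_def)
    let ?t = "\<lambda>n. norm ((diffs ^^ N) a n * z^n)"
    have st: "summable ?t"
      by (rule powser_insidea[OF smk[of R3]]) (use R z in auto)
    define g where "g n = \<bar>a (n + N)\<bar> * R2^(n + N)" for n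
    have sg: "summable g" unfolding g_def using absS summable_iff_shift[of "\<lambda>m. \<bar>a m\<bar> * R2^m" N] by simp
    have tle: "?t n / fact N * R^N \<le> g n" for n
    proof -
      have "?t n / fact N * R^N = (fact (n + N) / fact n / fact N) * \<bar>a (n + N)\<bar> * \<bar>z\<bar>^n * R^N"
        by (simp add: diffs_pow abs_mult power_abs)
      also have "\<dots> = \<bar>a (n + N)\<bar> * (real ((n + N) choose n) * \<bar>z\<bar>^n * R^N)"
        unfolding fact_ratio by simp
      also have "\<dots> \<le> \<bar>a (n + N)\<bar> * (\<bar>z\<bar> + R)^(n + N)"
        by (intro mult_left_mono binom_term) (use R in auto)
      also have "\<dots> \<le> \<bar>a (n + N)\<bar> * R2^(n + N)"
        by (intro mult_left_mono power_mono) (use z R in \<open>auto simp: R2_def\<close>)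
      finally show ?thesis unfolding g_def .
    qed
    have "\<bar>(deriv ^^ N) f \<xi>\<bar> = \<bar>\<Sum>n. (diffs ^^ N) a n * z^n\<bar>"
      using eq[of \<xi> N] z R by (simp add: z_def)
    also have "\<dots> \<le> (\<Sum>n. ?t n)"
      using summable_norm[OF st] by simp
    finally have "\<bar>(deriv ^^ N) f \<xi>\<bar> / fact N * R^N \<le> (\<Sum>n. ?t n) / fact N * R^N"
      using R by (intro mult_right_mono divide_right_mono) auto
    also have "\<dots> = (\<Sum>n. ?t n / fact N * R^N)"
      using suminf_divide[OF st, of "fact N"] suminf_mult2[OF summable_divide[OF st, of "fact N"], of "R^N"]
      by simp
    also have "\<dots> \<le> (\<Sum>n. g n)"
      by (intro suminf_le tle sg summable_mult2 summable_divide st)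
    also have "\<dots> \<le> S"
    proof -
      have "S = (\<Sum>n. g n) + (\<Sum>i<N. \<bar>a i\<bar> * R2^i)"
        unfolding S_def g_def by (rule suminf_split_initial_segment[OF absS])
      moreover have "(\<Sum>i<N. \<bar>a i\<bar> * R2^i) \<ge> 0" using R by (intro sum_nonneg) auto
      ultimately show ?thesis by simp
    qed
    finally show "\<bar>(deriv ^^ N) f \<xi>\<bar> / fact N * R^N \<le> S" .
  qed (use R S0 in auto)
qed


lemma ra_bound_compact:
  assumes ra: "real_analytic f" and K: "compact K"
  shows "\<exists>\<rho>>0. \<exists>B\<ge>0. \<forall>y\<in>K. \<forall>\<xi>. \<bar>\<xi> - y\<bar> \<le> \<rho> \<longrightarrow> (\<forall>N. \<bar>(deriv ^^ N) f \<xi>\<bar> / fact N * \<rho>^N \<le> B)"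
proof -
  have "\<forall>x. \<exists>R S. R > 0 \<and> S \<ge> 0 \<and> (\<forall>\<xi>. \<bar>\<xi> - x\<bar> \<le> R \<longrightarrow> (\<forall>N. \<bar>(deriv ^^ N) f \<xi>\<bar> / fact N * R^N \<le> S))"
    using ra_bound_local[OF ra] by blast
  then obtain Rf where "\<forall>x. \<exists>S. Rf x > 0 \<and> S \<ge> 0 \<and> (\<forall>\<xi>. \<bar>\<xi> - x\<bar> \<le> Rf x \<longrightarrow> (\<forall>N. \<bar>(deriv ^^ N) f \<xi>\<bar> / fact N * Rf x^N \<le> S))"
    unfolding choice_iff by blast
  then obtain Sf where RS0: "\<forall>x. Rf x > 0 \<and> Sf x \<ge> 0 \<and> (\<forall>\<xi>. \<bar>\<xi> - x\<bar> \<le> Rf x \<longrightarrow> (\<forall>N. \<bar>(deriv ^^ N) f \<xi>\<bar> / fact N * Rf x^N \<le> Sf x))"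
    unfolding choice_iff by blast
  have RS: "\<And>x. Rf x > 0" "\<And>x. Sf x \<ge> 0"
    "\<And>x \<xi> N. \<bar>\<xi> - x\<bar> \<le> Rf x \<Longrightarrow> \<bar>(deriv ^^ N) f \<xi>\<bar> / fact N * Rf x^N \<le> Sf x"
    using RS0 by blast+
  have cover: "K \<subseteq> (\<Union>x\<in>K. ball x (Rf x / 2))"
  proof
    fix y assume "y \<in> K"
    then show "y \<in> (\<Union>x\<in>K. ball x (Rf x / 2))" using RS(1)[of y] by (intro UN_I[of y]) auto
  qed
  have "\<exists>F. F \<subseteq> K \<and> finite F \<and> K \<subseteq> (\<Union>x\<in>F. ball x (Rf x / 2))"
    using compactE_image[OF K open_ball cover] by metis
  then obtain F where F: "F \<subseteq> K" "finite F" "K \<subseteq> (\<Union>x\<in>F. ball x (Rf x / 2))"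
    by blast
  define \<rho> where "\<rho> = Min (insert 1 ((\<lambda>x. Rf x / 2) ` F))"
  define B where "B = (\<Sum>x\<in>F. Sf x)"
  have \<rho>0: "\<rho> > 0" unfolding \<rho>_def using F(2) RS(1) by (subst Min_gr_iff) auto
  have \<rho>le: "\<rho> \<le> Rf x / 2" if "x \<in> F" for x unfolding \<rho>_def using F(2) that by (intro Min_le) auto
  have B0: "B \<ge> 0" unfolding B_def using RS(2) by (simp add: sum_nonneg)
  have "\<forall>y\<in>K. \<forall>\<xi>. \<bar>\<xi> - y\<bar> \<le> \<rho> \<longrightarrow> (\<forall>N. \<bar>(deriv ^^ N) f \<xi>\<bar> / fact N * \<rho>^N \<le> B)"
  proof (intro ballI allI impI)
    fix y \<xi> N assume y: "y \<in> K" and \<xi>: "\<bar>\<xi> - y\<bar> \<le> \<rho>"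
    from F(3) y obtain x where x0: "x \<in> F" "y \<in> ball x (Rf x / 2)" by blast
    then have x: "x \<in> F" "dist x y < Rf x / 2" by auto
    have "\<bar>\<xi> - x\<bar> \<le> Rf x" using x \<xi> \<rho>le[OF x(1)] unfolding dist_real_def by arith
    then have "\<bar>(deriv ^^ N) f \<xi>\<bar> / fact N * Rf x^N \<le> Sf x" by (rule RS(3))
    moreover have "\<bar>(deriv ^^ N) f \<xi>\<bar> / fact N * \<rho>^N \<le> \<bar>(deriv ^^ N) f \<xi>\<bar> / fact N * Rf x^N"
      using \<rho>0 \<rho>le[OF x(1)] RS(1)[of x] by (intro mult_left_mono power_mono) auto
    moreover have "Sf x \<le> B" unfolding B_def using F(2) x(1) RS(2)
      by (intro member_le_sum) auto
    ultimately show "\<bar>(deriv ^^ N) f \<xi>\<bar> / fact N * \<rho>^N \<le> B" by linarith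
  qed
  then show ?thesis using \<rho>0 B0 by (intro exI[of _ \<rho>] conjI exI[of _ B]) auto
qed

lemma ra_taylor:
  assumes ra: "real_analytic f" and \<rho>: "\<rho> > 0"
    and bd: "\<And>\<xi> N. \<bar>\<xi> - y\<bar> \<le> \<rho> \<Longrightarrow> \<bar>(deriv ^^ N) f \<xi>\<bar> / fact N * \<rho>^N \<le> B"
    and z: "\<bar>z\<bar> < \<rho>"
  shows "(\<lambda>n. (deriv ^^ n) f y / fact n * z^n) sums f (y + z)"
proof (cases "z = 0")
  case True
  then show ?thesis using powser_sums_zero[of "\<lambda>n. (deriv ^^ n) f y / fact n"] by simp
next
  case False
  define P where "P N = (\<Sum>m<N. (deriv ^^ m) f y / fact m * z^m)" for N
  have est: "\<bar>f (y + z) - P N\<bar> \<le> B * (\<bar>z\<bar> / \<rho>)^N" if N: "N > 0" for N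
  proof -
    have "\<exists>t. (if y + z < y then y + z < t \<and> t < y else y < t \<and> t < y + z) \<and>
      f (y + z) = (\<Sum>m<N. ((deriv ^^ m) f y / fact m) * (y + z - y)^m) + ((deriv ^^ N) f t / fact N) * (y + z - y)^N"
      by (rule Taylor[of N "\<lambda>m. (deriv ^^ m) f" f "y - \<bar>z\<bar>" "y + \<bar>z\<bar>" y "y + z"])
         (use N False ra_has_deriv[OF ra] in auto)
    then obtain t where t: "(if y + z < y then y + z < t \<and> t < y else y < t \<and> t < y + z)"
      and tay: "f (y + z) = (\<Sum>m<N. ((deriv ^^ m) f y / fact m) * (y + z - y)^m) + ((deriv ^^ N) f t / fact N) * (y + z - y)^N"
      by blast
    have tz: "\<bar>t - y\<bar> \<le> \<rho>" using t z by (auto split: if_splits)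
    have "\<bar>f (y + z) - P N\<bar> = \<bar>(deriv ^^ N) f t\<bar> / fact N * \<bar>z\<bar>^N"
      using tay by (simp add: P_def abs_mult power_abs)
    also have "\<dots> = (\<bar>(deriv ^^ N) f t\<bar> / fact N * \<rho>^N) * (\<bar>z\<bar> / \<rho>)^N"
      using \<rho> by (simp add: power_divide)
    also have "\<dots> \<le> B * (\<bar>z\<bar> / \<rho>)^N"
      by (intro mult_right_mono bd tz) (use \<rho> in auto)
    finally show ?thesis .
  qed
  have "(\<lambda>N. B * (\<bar>z\<bar> / \<rho>)^N) \<longlonglongrightarrow> 0"
    by (intro tendsto_mult_right_zero LIMSEQ_power_zero) (use z \<rho> in auto)
  then have "(\<lambda>N. f (y + z) - P N) \<longlonglongrightarrow> 0"
    by (rule Lim_null_comparison[rotated]) (use est in \<open>auto intro: eventually_sequentiallyI[of 1]\<close>)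
  from tendsto_diff[OF tendsto_const this, of "f (y + z)"]
  have "P \<longlonglongrightarrow> f (y + z)" by simp
  then show ?thesis unfolding sums_def P_def .
qed


lemma sup_ge:
  fixes P :: "real \<Rightarrow> real"
  assumes "continuous_on {-1..1} P" "s \<in> {-1..1::real}"
  shows "\<bar>P s\<bar> \<le> Sup ((\<lambda>s. \<bar>P s\<bar>) ` {-1..1})"
proof -
  have "compact ((\<lambda>s. \<bar>P s\<bar>) ` {-1..1::real})"
  proof (rule compact_continuous_image)
    show "continuous_on {-1..1} (\<lambda>s. \<bar>P s\<bar>)" using assms(1) by (rule continuous_on_rabs)
  qed simp
  then have "bdd_above ((\<lambda>s. \<bar>P s\<bar>) ` {-1..1::real})"
    by (intro bounded_imp_bdd_above compact_imp_bounded)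
  then show ?thesis using assms(2) by (intro cSup_upper) auto
qed

lemma st_norm_ge:
  fixes p1 p2 x1 x2 :: real
  assumes "continuous_on {-1..1} P1" "continuous_on {-1..1} P2"
  shows "\<bar>p1\<bar> \<le> st_norm (p1,p2,x1,x2,P1,P2)" "\<bar>p2\<bar> \<le> st_norm (p1,p2,x1,x2,P1,P2)"
    "\<bar>x1\<bar> \<le> st_norm (p1,p2,x1,x2,P1,P2)" "\<bar>x2\<bar> \<le> st_norm (p1,p2,x1,x2,P1,P2)"
    "\<And>s. s \<in> {-1..1} \<Longrightarrow> \<bar>P1 s\<bar> \<le> st_norm (p1,p2,x1,x2,P1,P2)"
    "\<And>s. s \<in> {-1..1} \<Longrightarrow> \<bar>P2 s\<bar> \<le> st_norm (p1,p2,x1,x2,P1,P2)"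
proof -
  let ?A = "{\<bar>p1\<bar>, \<bar>p2\<bar>, \<bar>x1\<bar>, \<bar>x2\<bar>,
          Sup ((\<lambda>s. \<bar>P1 s\<bar>) ` {-1..1}), Sup ((\<lambda>s. \<bar>P2 s\<bar>) ` {-1..1::real})}"
  have M: "a \<in> ?A \<Longrightarrow> a \<le> st_norm (p1,p2,x1,x2,P1,P2)" for a
    unfolding st_norm_def by (simp only: prod.case) (rule Max.coboundedI, simp_all)
  show "\<bar>p1\<bar> \<le> st_norm (p1,p2,x1,x2,P1,P2)" "\<bar>p2\<bar> \<le> st_norm (p1,p2,x1,x2,P1,P2)"
    "\<bar>x1\<bar> \<le> st_norm (p1,p2,x1,x2,P1,P2)" "\<bar>x2\<bar> \<le> st_norm (p1,p2,x1,x2,P1,P2)"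
    by (rule M; simp)+
  show "\<bar>P1 s\<bar> \<le> st_norm (p1,p2,x1,x2,P1,P2)" if "s \<in> {-1..1}" for s
    using sup_ge[OF assms(1) that] M[of "Sup ((\<lambda>s. \<bar>P1 s\<bar>) ` {-1..1})"] by simp
  show "\<bar>P2 s\<bar> \<le> st_norm (p1,p2,x1,x2,P1,P2)" if "s \<in> {-1..1}" for s
    using sup_ge[OF assms(2) that] M[of "Sup ((\<lambda>s. \<bar>P2 s\<bar>) ` {-1..1})"] by simp
qed

lemma st_norm_nonneg: "st_norm U \<ge> 0"
proof -
  obtain p1 p2 x1 x2 P1 P2 where U: "U = (p1,p2,x1,x2,P1,P2)" by (cases U) auto
  have "\<bar>p1\<bar> \<le> st_norm U" unfolding U st_norm_def by (simp only: prod.case) (rule Max.coboundedI, simp_all)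
  then show ?thesis by linarith
qed

lemma ext_norm_ge: "st_norm (fst x) \<le> ext_norm x" "\<bar>snd x\<bar> \<le> ext_norm x" "0 \<le> ext_norm x"
  unfolding ext_norm_def using st_norm_nonneg[of "fst x"] by auto

lemma int_bound:
  fixes f :: "real \<Rightarrow> real"
  assumes "continuous_on {-1..0} f" "\<And>s. s \<in> {-1..0} \<Longrightarrow> \<bar>f s\<bar> \<le> B"
  shows "\<bar>integral {-1..0} f\<bar> \<le> B"
proof -
  have B: "0 \<le> B" using assms(2)[of "-1"] by simp
  have "(f has_integral integral {-1..0} f) (cbox (-1) 0)"
    using integrable_continuous_interval[OF assms(1)] by (simp add: integrable_integral)
  from has_integral_bound[OF B this] assms(2) show ?thesis by simp
qed

lemma int_cont[intro]: "continuous_on {-1..0} (f::real\<Rightarrow>real) \<Longrightarrow> f integrable_on {-1..0}"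
  using integrable_continuous_interval by (metis atLeastAtMost_iff)

lemma multilin_intform:
  fixes g :: "real \<Rightarrow> real" and Phi :: "nat \<Rightarrow> ext \<Rightarrow> real \<Rightarrow> real"
  assumes cg: "continuous_on {-1..0} g"
    and gb: "\<And>s. s \<in> {-1..0} \<Longrightarrow> \<bar>g s\<bar> \<le> G"
    and lin: "\<And>i x y a b s. x \<in> Y \<Longrightarrow> y \<in> Y \<Longrightarrow>
        Phi i (ext_add (ext_scale a x) (ext_scale b y)) s = a * Phi i x s + b * Phi i y s"
    and cP: "\<And>i x. x \<in> Y \<Longrightarrow> continuous_on {-1..0} (Phi i x)"
    and bP: "\<And>i x s. x \<in> Y \<Longrightarrow> s \<in> {-1..0} \<Longrightarrow> \<bar>Phi i x s\<bar> \<le> L * ext_norm x"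
    and Lnn: "0 \<le> L"
  shows "multilin_rel Y n (\<lambda>v. integral {-1..0} (\<lambda>s. g s * (\<Prod>i<n. Phi i (v i) s))) (G * L^n)"
proof -
  have G: "0 \<le> G" using gb[of "-1"] by simp
  let ?M = "\<lambda>v. integral {-1..0} (\<lambda>s. g s * (\<Prod>i<n. Phi i (v i) s))"
  have P1: "\<forall>v w. (\<forall>i<n. v i = w i) \<longrightarrow> ?M v = ?M w"
  proof (intro allI impI)
    fix v w :: "nat \<Rightarrow> ext" assume "\<forall>i<n. v i = w i"
    then have "(\<Prod>i<n. Phi i (v i) s) = (\<Prod>i<n. Phi i (w i) s)" for s
      by (intro prod.cong) auto
    then show "?M v = ?M w" by simp
  qed
  have P2: "?M (v(i := ext_add (ext_scale s a) (ext_scale t b))) = s * ?M (v(i := a)) + t * ?M (v(i := b))"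
    if vY: "\<forall>j<n. v j \<in> Y" and i: "i < n" and a: "a \<in> Y" and b: "b \<in> Y" for v i a b s t
  proof -
    define Q where "Q \<sigma> = (\<Prod>j\<in>{..<n}-{i}. Phi j (v j) \<sigma>)" for \<sigma>
    have split: "(\<Prod>j<n. Phi j ((v(i := x)) j) \<sigma>) = Phi i x \<sigma> * Q \<sigma>" for x \<sigma>
    proof -
      have "(\<Prod>j<n. Phi j ((v(i := x)) j) \<sigma>) = Phi i ((v(i := x)) i) \<sigma> * (\<Prod>j\<in>{..<n}-{i}. Phi j ((v(i := x)) j) \<sigma>)"
        using i by (subst prod.remove[of "{..<n}" i]) auto
      also have "(\<Prod>j\<in>{..<n}-{i}. Phi j ((v(i := x)) j) \<sigma>) = Q \<sigma>"
        unfolding Q_def by (intro prod.cong) auto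
      finally show ?thesis by simp
    qed
    have cQ: "continuous_on {-1..0} Q"
      unfolding Q_def by (intro continuous_on_prod cP) (use vY in auto)
    have ia: "(\<lambda>\<sigma>. g \<sigma> * (Phi i a \<sigma> * Q \<sigma>)) integrable_on {-1..0}"
      by (intro int_cont continuous_intros cg cP a cQ)
    have ib: "(\<lambda>\<sigma>. g \<sigma> * (Phi i b \<sigma> * Q \<sigma>)) integrable_on {-1..0}"
      by (intro int_cont continuous_intros cg cP b cQ)
    have "?M (v(i := ext_add (ext_scale s a) (ext_scale t b))) =
        integral {-1..0} (\<lambda>\<sigma>. s * (g \<sigma> * (Phi i a \<sigma> * Q \<sigma>)) + t * (g \<sigma> * (Phi i b \<sigma> * Q \<sigma>)))"
      unfolding split lin[OF a b] by (simp add: algebra_simps)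
    also have "\<dots> = s * integral {-1..0} (\<lambda>\<sigma>. g \<sigma> * (Phi i a \<sigma> * Q \<sigma>)) + t * integral {-1..0} (\<lambda>\<sigma>. g \<sigma> * (Phi i b \<sigma> * Q \<sigma>))"
      by (subst Henstock_Kurzweil_Integration.integral_add)
         (auto intro!: int_cont continuous_intros cg cP a b cQ)
    also have "\<dots> = s * ?M (v(i := a)) + t * ?M (v(i := b))"
      unfolding split by simp
    finally show ?thesis .
  qed
  have P4: "\<bar>?M v\<bar> \<le> G * L^n * (\<Prod>i<n. ext_norm (v i))" if vY: "\<forall>i<n. v i \<in> Y" for v
  proof (rule int_bound)
    show "continuous_on {-1..0} (\<lambda>s. g s * (\<Prod>i<n. Phi i (v i) s))"
      by (intro continuous_intros continuous_on_prod cg cP) (use vY in auto)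
    fix s :: real assume s: "s \<in> {-1..0}"
    have "\<bar>g s * (\<Prod>i<n. Phi i (v i) s)\<bar> = \<bar>g s\<bar> * (\<Prod>i<n. \<bar>Phi i (v i) s\<bar>)"
      by (simp add: abs_mult abs_prod)
    also have "\<dots> \<le> G * (\<Prod>i<n. L * ext_norm (v i))"
      by (intro mult_mono gb s prod_mono conjI bP) (use vY s G in \<open>auto intro: prod_nonneg\<close>)
    also have "\<dots> = G * L^n * (\<Prod>i<n. ext_norm (v i))"
      by (simp add: prod.distrib)
    finally show "\<bar>g s * (\<Prod>i<n. Phi i (v i) s)\<bar> \<le> G * L^n * (\<Prod>i<n. ext_norm (v i))" .
  qed
  show ?thesis unfolding multilin_rel_def
    using P1 P2 P4 G Lnn by (auto simp del: fun_upd_apply)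
qed


lemma multilin_parts:
  assumes "multilin_rel Y n M C"
  shows "\<forall>v w. (\<forall>i<n. v i = w i) \<longrightarrow> M v = M w"
    "\<And>v i a b s t. (\<forall>j<n. v j \<in> Y) \<Longrightarrow> i < n \<Longrightarrow> a \<in> Y \<Longrightarrow> b \<in> Y \<Longrightarrow>
        M (v(i := ext_add (ext_scale s a) (ext_scale t b))) = s * M (v(i := a)) + t * M (v(i := b))"
    "0 \<le> C"
    "\<And>v. (\<forall>i<n. v i \<in> Y) \<Longrightarrow> \<bar>M v\<bar> \<le> C * (\<Prod>i<n. ext_norm (v i))"
  using assms unfolding multilin_rel_def by meson+

lemma multilin_intro:
  assumes "\<forall>v w. (\<forall>i<n. v i = w i) \<longrightarrow> M v = M w"
    "\<And>v i a b s t. (\<forall>j<n. v j \<in> Y) \<Longrightarrow> i < n \<Longrightarrow> a \<in> Y \<Longrightarrow> b \<in> Y \<Longrightarrow>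
        M (v(i := ext_add (ext_scale s a) (ext_scale t b))) = s * M (v(i := a)) + t * M (v(i := b))"
    "0 \<le> C"
    "\<And>v. (\<forall>i<n. v i \<in> Y) \<Longrightarrow> \<bar>M v\<bar> \<le> C * (\<Prod>i<n. ext_norm (v i))"
  shows "multilin_rel Y n M C"
  using assms unfolding multilin_rel_def by blast

lemma multilin_add:
  assumes A: "multilin_rel Y n M C" and B: "multilin_rel Y n M' C'"
  shows "multilin_rel Y n (\<lambda>v. M v + M' v) (C + C')"
proof (rule multilin_intro)
  note A1 = multilin_parts[OF A] and B1 = multilin_parts[OF B]
  show "\<forall>v w. (\<forall>i<n. v i = w i) \<longrightarrow> M v + M' v = M w + M' w" using A1(1) B1(1) by metis
  show "0 \<le> C + C'" using A1(3) B1(3) by simp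
  fix v i a b s t assume "\<forall>j<n. v j \<in> Y" "i < n" "a \<in> Y" "b \<in> Y"
  then show "M (v(i := ext_add (ext_scale s a) (ext_scale t b))) + M' (v(i := ext_add (ext_scale s a) (ext_scale t b))) =
        s * (M (v(i := a)) + M' (v(i := a))) + t * (M (v(i := b)) + M' (v(i := b)))"
    using A1(2)[of v i a b s t] B1(2)[of v i a b s t] by (simp add: algebra_simps)
next
  note A1 = multilin_parts[OF A] and B1 = multilin_parts[OF B]
  fix v assume "\<forall>i<n. v i \<in> Y"
  then have "\<bar>M v\<bar> \<le> C * (\<Prod>i<n. ext_norm (v i))" "\<bar>M' v\<bar> \<le> C' * (\<Prod>i<n. ext_norm (v i))"
    using A1(4) B1(4) by blast+
  then show "\<bar>M v + M' v\<bar> \<le> (C + C') * (\<Prod>i<n. ext_norm (v i))"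
    using abs_triangle_ineq[of "M v" "M' v"] by (simp add: algebra_simps)
qed

lemma multilin_uminus:
  assumes A: "multilin_rel Y n M C"
  shows "multilin_rel Y n (\<lambda>v. - M v) C"
proof (rule multilin_intro)
  note A1 = multilin_parts[OF A]
  show "\<forall>v w. (\<forall>i<n. v i = w i) \<longrightarrow> - M v = - M w" using A1(1) by metis
  show "0 \<le> C" using A1(3) by simp
  fix v i a b s t assume "\<forall>j<n. v j \<in> Y" "i < n" "a \<in> Y" "b \<in> Y"
  then show "- M (v(i := ext_add (ext_scale s a) (ext_scale t b))) = s * - M (v(i := a)) + t * - M (v(i := b))"
    using A1(2)[of v i a b s t] by (simp add: algebra_simps)
next
  note A1 = multilin_parts[OF A]
  fix v assume "\<forall>i<n. v i \<in> Y"
  then show "\<bar>- M v\<bar> \<le> C * (\<Prod>i<n. ext_norm (v i))" using A1(4) by simp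
qed

lemma multilin_zero: "multilin_rel Y n (\<lambda>v. 0) 0"
  unfolding multilin_rel_def by simp

lemma multilin_cong: "multilin_rel Y n M C \<Longrightarrow> (\<And>v. M v = M' v) \<Longrightarrow> C = C' \<Longrightarrow> multilin_rel Y n M' C'"
proof -
  assume "multilin_rel Y n M C" "\<And>v. M v = M' v" "C = C'"
  moreover have "M = M'" using \<open>\<And>v. M v = M' v\<close> by blast
  ultimately show ?thesis by simp
qed

definition pf :: "real \<Rightarrow> nat \<Rightarrow> (nat \<Rightarrow> ext \<Rightarrow> real) \<Rightarrow> (nat \<Rightarrow> ext) \<Rightarrow> real" where
  "pf k n \<phi> v = k * (\<Prod>i<n. \<phi> i (v i))"

lemma multilin_pf:
  assumes lin: "\<And>i x y a b. x \<in> Y \<Longrightarrow> y \<in> Y \<Longrightarrow>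
        \<phi> i (ext_add (ext_scale a x) (ext_scale b y)) = a * \<phi> i x + b * \<phi> i y"
    and bP: "\<And>i x. x \<in> Y \<Longrightarrow> \<bar>\<phi> i x\<bar> \<le> L * ext_norm x"
    and L: "0 \<le> L"
  shows "multilin_rel Y n (pf k n \<phi>) (\<bar>k\<bar> * L^n)"
  unfolding pf_def
  using multilin_intform[where g = "\<lambda>s. k" and G = "\<bar>k\<bar>" and Phi = "\<lambda>i x s. \<phi> i x" and L = L and Y = Y and n = n]
  using lin bP L by simp

definition Jf :: "real \<Rightarrow> ext \<Rightarrow> real" where "Jf w x = Jw w (fst x)"

definition A1op :: "st \<Rightarrow> real \<Rightarrow> real" where
  "A1op H = (case H of (p1,p2,x1,x2,P1,P2) \<Rightarrow> (\<lambda>s. P2 (s+1) - P1 s))"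
definition A2op :: "st \<Rightarrow> real \<Rightarrow> real" where
  "A2op H = (case H of (p1,p2,x1,x2,P1,P2) \<Rightarrow> (\<lambda>s. P1 (s+1) - P2 s))"

definition intM :: "(real \<Rightarrow> real) \<Rightarrow> (st \<Rightarrow> real \<Rightarrow> real) \<Rightarrow> st \<Rightarrow> nat \<Rightarrow> (nat \<Rightarrow> ext) \<Rightarrow> real" where
  "intM f A U n v = integral {-1..0} (\<lambda>s. (deriv ^^ n) f (A U s) / fact n * (\<Prod>i<n. A (fst (v i)) s))"

definition polyM :: "real \<Rightarrow> st \<Rightarrow> real \<Rightarrow> nat \<Rightarrow> (nat \<Rightarrow> ext) \<Rightarrow> real" where
  "polyM w U d n v = (if n = 0 then pf (d^2 * Jw w U) 0 (\<lambda>_. snd) v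
     else if n = 1 then pf (d^2) 1 (\<lambda>_. Jf w) v + pf (2*d*Jw w U) 1 (\<lambda>_. snd) v
     else if n = 2 then pf (2*d) 2 (\<lambda>i. if i = 0 then snd else Jf w) v + pf (Jw w U) 2 (\<lambda>_. snd) v
     else if n = 3 then pf 1 3 (\<lambda>i. if i = 2 then Jf w else snd) v else 0)"

definition Cpoly :: "real \<Rightarrow> st \<Rightarrow> real \<Rightarrow> nat \<Rightarrow> real" where
  "Cpoly w U d n = (if n = 0 then \<bar>d^2 * Jw w U\<bar> * (1 + 1/w)^0
     else if n = 1 then \<bar>d^2\<bar> * (1 + 1/w)^1 + \<bar>2*d*Jw w U\<bar> * (1 + 1/w)^1
     else if n = 2 then \<bar>2*d\<bar> * (1 + 1/w)^2 + \<bar>Jw w U\<bar> * (1 + 1/w)^2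
     else if n = 3 then \<bar>1\<bar> * (1 + 1/w)^3 else 0)"

definition Mfun :: "(real \<Rightarrow> real) \<Rightarrow> (real \<Rightarrow> real) \<Rightarrow> real \<Rightarrow> st \<Rightarrow> real \<Rightarrow> nat \<Rightarrow> (nat \<Rightarrow> ext) \<Rightarrow> real" where
  "Mfun dV1 dV2 w U d n v = polyM w U d n v - intM dV1 A1op U n v - intM dV2 A2op U n v"

lemma Jw_lin: "Jw w (st_add (st_scale a X) (st_scale b Z)) = a * Jw w X + b * Jw w Z"
  by (cases X; cases Z) (simp add: Jw_def st_add_def st_scale_def add_divide_distrib algebra_simps)

lemma Jw_add: "Jw w (st_add X Z) = Jw w X + Jw w Z"
  by (cases X; cases Z) (simp add: Jw_def st_add_def add_divide_distrib algebra_simps)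

lemma fst_ext_lin: "fst (ext_add (ext_scale a x) (ext_scale b y)) = st_add (st_scale a (fst x)) (st_scale b (fst y))"
  by (simp add: ext_add_def ext_scale_def)

lemma snd_ext_lin: "snd (ext_add (ext_scale a x) (ext_scale b y)) = a * snd x + b * snd y"
  by (simp add: ext_add_def ext_scale_def)

lemma Jw_bound:
  assumes "w > 0" "X \<in> Asp"
  shows "\<bar>Jw w X\<bar> \<le> (1 + 1/w) * st_norm X"
proof -
  obtain p1 p2 x1 x2 P1 P2 where X: "X = (p1,p2,x1,x2,P1,P2)" by (cases X) auto
  have c: "continuous_on {-1..1} P1" "continuous_on {-1..1} P2" using assms(2) by (auto simp: X Asp_def)
  have "\<bar>x1 + x2 / w\<bar> \<le> \<bar>x1\<bar> + \<bar>x2\<bar> / w" using assms(1) by (simp add: abs_triangle_ineq[THEN order_trans] abs_divide)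
  also have "\<dots> \<le> st_norm X + st_norm X / w"
  proof -
    have "\<bar>x1\<bar> \<le> st_norm X" "\<bar>x2\<bar> \<le> st_norm X" using st_norm_ge(3,4)[OF c] unfolding X by auto
    then show ?thesis using assms(1) by (intro add_mono divide_right_mono) auto
  qed
  finally show ?thesis by (simp add: X Jw_def algebra_simps)
qed

lemma Xsp_Asp: "X \<in> Xsp \<Longrightarrow> X \<in> Asp"
  by (auto simp: Xsp_def Asp_def)

lemma polyM_multilin:
  assumes w: "w > 0"
  shows "multilin_rel (Xsp \<times> UNIV) n (polyM w U d n) (Cpoly w U d n)"
proof -
  let ?L = "1 + 1/w"
  have L: "0 \<le> ?L" "1 \<le> ?L" using w by auto
  have linJ: "Jf w (ext_add (ext_scale a x) (ext_scale b y)) = a * Jf w x + b * Jf w y" for a b x y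
    unfolding Jf_def fst_ext_lin Jw_lin ..
  have linS: "snd (ext_add (ext_scale a x) (ext_scale b y)) = a * snd x + b * snd y" for a b x y
    by (rule snd_ext_lin)
  have bJ: "\<bar>Jf w x\<bar> \<le> ?L * ext_norm x" if "x \<in> Xsp \<times> UNIV" for x
  proof -
    have "\<bar>Jf w x\<bar> \<le> ?L * st_norm (fst x)"
      using Jw_bound[OF w Xsp_Asp, of "fst x"] that unfolding Jf_def by auto
    also have "\<dots> \<le> ?L * ext_norm x" by (intro mult_left_mono ext_norm_ge(1) L(1))
    finally show ?thesis .
  qed
  have bS: "\<bar>snd x\<bar> \<le> ?L * ext_norm x" for x
    using ext_norm_ge(2,3)[of x] L mult_right_mono[OF L(2) ext_norm_ge(3)[of x]] by simp
  have gen: "multilin_rel (Xsp \<times> UNIV) m (pf k m \<phi>) (\<bar>k\<bar> * ?L^m)"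
    if "\<And>i. \<phi> i = snd \<or> \<phi> i = Jf w" for k m \<phi>
  proof (rule multilin_pf[OF _ _ L(1)])
    fix i and x y :: ext and a b :: real show "\<phi> i (ext_add (ext_scale a x) (ext_scale b y)) = a * \<phi> i x + b * \<phi> i y"
      by (cases "\<phi> i = snd") (use that[of i] linJ[of a x b y] linS[of a x b y] in simp_all)
  next
    fix i and x :: ext assume "x \<in> Xsp \<times> UNIV" then show "\<bar>\<phi> i x\<bar> \<le> ?L * ext_norm x"
      by (cases "\<phi> i = snd") (use that[of i] bJ[of x] bS[of x] in simp_all)
  qed
  consider "n = 0" | "n = 1" | "n = 2" | "n = 3" | "n \<ge> 4" by linarith
  then show ?thesis
  proof cases
    case 1 show ?thesis unfolding 1
      by (intro multilin_cong[OF gen[where \<phi> = "\<lambda>_. snd" and k = "d^2 * Jw w U" and m = 0]]) (simp_all add: polyM_def Cpoly_def)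
  next
    case 2 show ?thesis unfolding 2
      by (intro multilin_cong[OF multilin_add[OF gen[where \<phi> = "\<lambda>_. Jf w" and k = "d^2" and m = 1] gen[where \<phi> = "\<lambda>_. snd" and k = "2*d*Jw w U" and m = 1]]])
         (simp_all add: polyM_def Cpoly_def)
  next
    case 3 show ?thesis unfolding 3
      by (intro multilin_cong[OF multilin_add[OF gen[where \<phi> = "\<lambda>i. if i = 0 then snd else Jf w" and k = "2*d" and m = 2]
            gen[where \<phi> = "\<lambda>_. snd" and k = "Jw w U" and m = 2]]])
         (simp_all add: polyM_def Cpoly_def)
  next
    case 4 show ?thesis unfolding 4
      by (intro multilin_cong[OF gen[where \<phi> = "\<lambda>i. if i = 2 then Jf w else snd" and k = 1 and m = 3]])
         (simp_all add: polyM_def Cpoly_def)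
  next
    case 5 then show ?thesis
      by (intro multilin_cong[OF multilin_zero]) (simp_all add: polyM_def Cpoly_def)
  qed
qed

lemma polyM_sums:
  "(\<lambda>n. polyM w U d n (\<lambda>_. h)) sums ((d + snd h)^2 * Jw w (st_add U (fst h)))"
proof -
  have "(\<lambda>n. polyM w U d n (\<lambda>_. h)) sums (\<Sum>n\<in>{0,1,2,3}. polyM w U d n (\<lambda>_. h))"
    by (rule sums_finite) (auto simp: polyM_def)
  also have "(\<Sum>n\<in>{0,1,2,3}. polyM w U d n (\<lambda>_. h)) = (d + snd h)^2 * Jw w (st_add U (fst h))"
    by (simp add: polyM_def pf_def Jf_def Jw_add lessThan_nat_numeral power2_eq_square algebra_simps)
  finally show ?thesis .
qed

lemma Cpoly_summable: "summable (\<lambda>n. Cpoly w U d n * r^n)"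
  by (rule summable_finite[of "{0,1,2,3}"]) (auto simp: Cpoly_def)


lemma intM_main:
  fixes A :: "st \<Rightarrow> real \<Rightarrow> real"
  assumes ra: "real_analytic f"
   and lin: "\<And>X Z a b s. A (st_add (st_scale a X) (st_scale b Z)) s = a * A X s + b * A Z s"
   and add: "\<And>X Z s. A (st_add X Z) s = A X s + A Z s"
   and cont: "\<And>X. X \<in> Asp \<Longrightarrow> continuous_on {-1..0} (A X)"
   and bnd: "\<And>X s. X \<in> Asp \<Longrightarrow> s \<in> {-1..0} \<Longrightarrow> \<bar>A X s\<bar> \<le> 2 * st_norm X"
   and U: "U \<in> Asp"
  shows "\<exists>\<rho>>0. \<exists>B\<ge>0. (\<forall>n. multilin_rel (Xsp \<times> UNIV) n (intM f A U n) (B * (2/\<rho>)^n)) \<and>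
           (\<forall>h\<in>Xsp \<times> UNIV. ext_norm h < \<rho>/2 \<longrightarrow>
              (\<lambda>n. intM f A U n (\<lambda>_. h)) sums integral {-1..0} (\<lambda>s. f (A (st_add U (fst h)) s)))"
proof -
  define K where "K = A U ` {-1..0}"
  have K: "compact K" unfolding K_def by (intro compact_continuous_image cont U compact_Icc)
  obtain \<rho> B where \<rho>: "\<rho> > 0" and B: "B \<ge> 0"
    and bd: "\<And>y \<xi> N. y \<in> K \<Longrightarrow> \<bar>\<xi> - y\<bar> \<le> \<rho> \<Longrightarrow> \<bar>(deriv ^^ N) f \<xi>\<bar> / fact N * \<rho>^N \<le> B"
    using ra_bound_compact[OF ra K] by blast
  define g where "g n s = (deriv ^^ n) f (A U s) / fact n" for n s
  have cg: "continuous_on {-1..0} (g n)" for n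
    unfolding g_def
    by (intro continuous_intros continuous_on_compose2[OF ra_cont[OF ra, of UNIV n] cont[OF U]]) auto
  have gb: "\<bar>g n s\<bar> \<le> B / \<rho>^n" if s: "s \<in> {-1..0}" for n s
  proof -
    have "A U s \<in> K" using s by (auto simp: K_def)
    from bd[OF this, of "A U s" n] have "\<bar>(deriv ^^ n) f (A U s)\<bar> / fact n * \<rho>^n \<le> B" using \<rho> by simp
    then show ?thesis using \<rho> by (simp add: g_def pos_le_divide_eq abs_divide)
  qed
  have ml: "multilin_rel (Xsp \<times> UNIV) n (intM f A U n) (B * (2/\<rho>)^n)" for n
  proof -
    have "multilin_rel (Xsp \<times> UNIV) n (\<lambda>v. integral {-1..0} (\<lambda>s. g n s * (\<Prod>i<n. (\<lambda>i x s. A (fst x) s) i (v i) s))) (B / \<rho>^n * 2^n)"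
    proof (rule multilin_intform[OF cg gb])
      fix i and a b s :: real and x y :: ext
      show "A (fst (ext_add (ext_scale a x) (ext_scale b y))) s = a * A (fst x) s + b * A (fst y) s"
        unfolding fst_ext_lin lin ..
    next
      fix i and x :: ext assume "x \<in> Xsp \<times> UNIV"
      then show "continuous_on {-1..0} (A (fst x))" by (intro cont Xsp_Asp) auto
    next
      fix i and s :: real and x :: ext assume x: "x \<in> Xsp \<times> UNIV" and s: "s \<in> {-1..0}"
      have "\<bar>A (fst x) s\<bar> \<le> 2 * st_norm (fst x)" using x s by (intro bnd Xsp_Asp) auto
      also have "\<dots> \<le> 2 * ext_norm x" using ext_norm_ge(1)[of x] by simp
      finally show "\<bar>A (fst x) s\<bar> \<le> 2 * ext_norm x" .
    qed auto
    then show ?thesis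
      by (rule multilin_cong) (simp_all add: intM_def g_def power_divide)
  qed
  have sm: "(\<lambda>n. intM f A U n (\<lambda>_. h)) sums integral {-1..0} (\<lambda>s. f (A (st_add U (fst h)) s))"
    if h: "h \<in> Xsp \<times> UNIV" "ext_norm h < \<rho>/2" for h
  proof -
    define z where "z s = A (fst h) s" for s
    define q where "q = 2 * ext_norm h / \<rho>"
    have q: "0 \<le> q" "q < 1" using h(2) \<rho> ext_norm_ge(3)[of h] by (auto simp: q_def field_simps)
    have zb: "\<bar>z s\<bar> \<le> 2 * ext_norm h" if "s \<in> {-1..0}" for s
    proof -
      have "\<bar>z s\<bar> \<le> 2 * st_norm (fst h)" unfolding z_def using h(1) that by (intro bnd Xsp_Asp) auto
      also have "\<dots> \<le> 2 * ext_norm h" using ext_norm_ge(1)[of h] by simp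
      finally show ?thesis .
    qed
    have cz: "continuous_on {-1..0} z" unfolding z_def using h(1) by (intro cont Xsp_Asp) auto
    have eqI: "intM f A U n (\<lambda>_. h) = integral {-1..0} (\<lambda>s. g n s * z s ^ n)" for n
      by (simp add: intM_def g_def z_def)
    have tb: "\<bar>g n s * z s ^ n\<bar> \<le> B * q^n" if s: "s \<in> {-1..0}" for n s
    proof -
      have "\<bar>g n s * z s ^ n\<bar> = \<bar>g n s\<bar> * \<bar>z s\<bar>^n" by (simp add: abs_mult power_abs)
      also have "\<dots> \<le> B / \<rho>^n * (2 * ext_norm h)^n"
        by (intro mult_mono gb s power_mono zb) (use \<rho> B in auto)
      also have "\<dots> = B * q^n" by (simp add: q_def power_divide)
      finally show ?thesis .
    qed
    define F where "F k s = (\<Sum>n<k. g n s * z s ^ n)" for k s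
    have cF: "continuous_on {-1..0} (F k)" for k
      unfolding F_def by (intro continuous_intros cg cz)
    have Fb: "norm (F k s) \<le> B / (1 - q)" if s: "s \<in> {-1..0}" for k s
    proof -
      have "norm (F k s) \<le> (\<Sum>n<k. \<bar>g n s * z s ^ n\<bar>)" unfolding F_def real_norm_def by (rule sum_abs)
      also have "\<dots> \<le> (\<Sum>n<k. B * q^n)" by (intro sum_mono tb s)
      also have "\<dots> \<le> (\<Sum>n. B * q^n)"
        by (intro sum_le_suminf summable_mult summable_geometric) (use q B in auto)
      also have "\<dots> = B / (1 - q)" using suminf_mult[OF summable_geometric[of q], of B] suminf_geometric[of q] q
        by simp
      finally show ?thesis .
    qed
    have conv: "(\<lambda>k. F k s) \<longlonglongrightarrow> f (A U s + z s)" if s: "s \<in> {-1..0}" for s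
    proof -
      have "A U s \<in> K" using s by (auto simp: K_def)
      have "(\<lambda>n. (deriv ^^ n) f (A U s) / fact n * z s ^ n) sums f (A U s + z s)"
        by (rule ra_taylor[OF ra \<rho> bd[OF \<open>A U s \<in> K\<close>]]) (use zb[OF s] h(2) in auto)
      then show ?thesis unfolding sums_def F_def g_def .
    qed
    have dc: "(\<lambda>k. integral {-1..0} (F k)) \<longlonglongrightarrow> integral {-1..0} (\<lambda>s. f (A U s + z s))"
      by (rule dominated_convergence(2)[where h = "\<lambda>_. B / (1 - q)"])
         (use cF Fb conv in \<open>auto intro: int_cont\<close>)
    have iF: "integral {-1..0} (F k) = (\<Sum>n<k. intM f A U n (\<lambda>_. h))" for k
      unfolding F_def eqI
      by (rule Henstock_Kurzweil_Integration.integral_sum) (auto intro!: int_cont continuous_intros cg cz)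
    have "(\<lambda>s. f (A (st_add U (fst h)) s)) = (\<lambda>s. f (A U s + z s))" by (simp add: add z_def)
    then show ?thesis using dc unfolding sums_def iF by simp
  qed
  show ?thesis using \<rho> B ml sm by (intro exI[of _ \<rho>] conjI exI[of _ B]) auto
qed


lemma Asp_add: "X \<in> Asp \<Longrightarrow> Z \<in> Asp \<Longrightarrow> st_add X Z \<in> Asp"
  by (cases X; cases Z) (auto simp: Asp_def st_add_def intro!: continuous_intros)

lemma shift_cont:
  fixes P :: "real \<Rightarrow> real"
  assumes "continuous_on {-1..1} P"
  shows "continuous_on {-1..0} (\<lambda>s. P (s + 1))" "continuous_on {-1..0} P"
proof -
  show "continuous_on {-1..0} (\<lambda>s. P (s + 1))"
    by (rule continuous_on_compose2[OF assms]) (auto intro!: continuous_intros)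
  show "continuous_on {-1..0} P" by (rule continuous_on_subset[OF assms]) auto
qed

lemma A1_lin: "A1op (st_add (st_scale a X) (st_scale b Z)) s = a * A1op X s + b * A1op Z s"
  by (cases X; cases Z) (simp add: A1op_def st_add_def st_scale_def algebra_simps)
lemma A2_lin: "A2op (st_add (st_scale a X) (st_scale b Z)) s = a * A2op X s + b * A2op Z s"
  by (cases X; cases Z) (simp add: A2op_def st_add_def st_scale_def algebra_simps)
lemma A1_add: "A1op (st_add X Z) s = A1op X s + A1op Z s"
  by (cases X; cases Z) (simp add: A1op_def st_add_def algebra_simps)
lemma A2_add: "A2op (st_add X Z) s = A2op X s + A2op Z s"
  by (cases X; cases Z) (simp add: A2op_def st_add_def algebra_simps)

lemma A1_cont: "X \<in> Asp \<Longrightarrow> continuous_on {-1..0} (A1op X)"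
proof -
  assume X: "X \<in> Asp"
  obtain p1 p2 x1 x2 P1 P2 where XX: "X = (p1,p2,x1,x2,P1,P2)" by (cases X) auto
  have c: "continuous_on {-1..1} P1" "continuous_on {-1..1} P2" using X by (auto simp: XX Asp_def)
  show ?thesis unfolding XX A1op_def prod.case
    by (intro continuous_on_diff shift_cont c)
qed
lemma A2_cont: "X \<in> Asp \<Longrightarrow> continuous_on {-1..0} (A2op X)"
proof -
  assume X: "X \<in> Asp"
  obtain p1 p2 x1 x2 P1 P2 where XX: "X = (p1,p2,x1,x2,P1,P2)" by (cases X) auto
  have c: "continuous_on {-1..1} P1" "continuous_on {-1..1} P2" using X by (auto simp: XX Asp_def)
  show ?thesis unfolding XX A2op_def prod.case
    by (intro continuous_on_diff shift_cont c)
qed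

lemma A1_bnd: "X \<in> Asp \<Longrightarrow> s \<in> {-1..0} \<Longrightarrow> \<bar>A1op X s\<bar> \<le> 2 * st_norm X"
proof -
  assume X: "X \<in> Asp" and s: "s \<in> {-1..0}"
  obtain p1 p2 x1 x2 P1 P2 where XX: "X = (p1,p2,x1,x2,P1,P2)" by (cases X) auto
  have c: "continuous_on {-1..1} P1" "continuous_on {-1..1} P2" using X by (auto simp: XX Asp_def)
  have "\<bar>P2 (s+1)\<bar> \<le> st_norm X" "\<bar>P1 s\<bar> \<le> st_norm X"
    using st_norm_ge(5,6)[OF c] s unfolding XX by auto
  then show ?thesis by (simp add: XX A1op_def)
qed
lemma A2_bnd: "X \<in> Asp \<Longrightarrow> s \<in> {-1..0} \<Longrightarrow> \<bar>A2op X s\<bar> \<le> 2 * st_norm X"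
proof -
  assume X: "X \<in> Asp" and s: "s \<in> {-1..0}"
  obtain p1 p2 x1 x2 P1 P2 where XX: "X = (p1,p2,x1,x2,P1,P2)" by (cases X) auto
  have c: "continuous_on {-1..1} P1" "continuous_on {-1..1} P2" using X by (auto simp: XX Asp_def)
  have "\<bar>P1 (s+1)\<bar> \<le> st_norm X" "\<bar>P2 s\<bar> \<le> st_norm X"
    using st_norm_ge(5,6)[OF c] s unfolding XX by auto
  then show ?thesis by (simp add: XX A2op_def)
qed

lemma ra_cont0: "real_analytic f \<Longrightarrow> continuous_on S f"
  using ra_cont[of f S 0] by simp

lemma Jfun_split:
  assumes ra1: "real_analytic dV1" and ra2: "real_analytic dV2" and X: "X \<in> Asp"
  shows "Jfun dV1 dV2 w c X = c^2 * Jw w X - integral {-1..0} (\<lambda>s. dV1 (A1op X s)) - integral {-1..0} (\<lambda>s. dV2 (A2op X s))"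
proof -
  have i1: "(\<lambda>s. dV1 (A1op X s)) integrable_on {-1..0}"
    by (intro int_cont continuous_on_compose2[OF ra_cont0[OF ra1, of UNIV] A1_cont[OF X]]) auto
  have i2: "(\<lambda>s. dV2 (A2op X s)) integrable_on {-1..0}"
    by (intro int_cont continuous_on_compose2[OF ra_cont0[OF ra2, of UNIV] A2_cont[OF X]]) auto
  have "Jfun dV1 dV2 w c X = c^2 * Jw w X - integral {-1..0} (\<lambda>s. dV1 (A1op X s) + dV2 (A2op X s))"
    by (cases X) (simp add: Jfun_def Jw_def A1op_def A2op_def)
  also have "\<dots> = c^2 * Jw w X - integral {-1..0} (\<lambda>s. dV1 (A1op X s)) - integral {-1..0} (\<lambda>s. dV2 (A2op X s))"
    by (simp add: Henstock_Kurzweil_Integration.integral_add[OF i1 i2])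
  finally show ?thesis .
qed

lemma J_analytic_at:
  assumes ra1: "real_analytic dV1" and ra2: "real_analytic dV2" and w: "w > 0" and U: "U \<in> Xsp"
  shows "\<exists>r>0. \<exists>C. (\<forall>n. multilin_rel (Xsp \<times> UNIV) n (Mfun dV1 dV2 w U d n) (C n)) \<and>
     summable (\<lambda>n. C n * r^n) \<and>
     (\<forall>h\<in>Xsp \<times> UNIV. ext_norm h < r \<longrightarrow>
        (\<lambda>n. Mfun dV1 dV2 w U d n (\<lambda>_. h)) sums Jfun dV1 dV2 w (d + snd h) (st_add U (fst h)))"
proof -
  have UA: "U \<in> Asp" using U by (rule Xsp_Asp)
  obtain \<rho>1 B1 where \<rho>1: "\<rho>1 > 0" "B1 \<ge> 0"
    and ml1: "\<And>n. multilin_rel (Xsp \<times> UNIV) n (intM dV1 A1op U n) (B1 * (2/\<rho>1)^n)"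
    and sm1: "\<And>h. h \<in> Xsp \<times> UNIV \<Longrightarrow> ext_norm h < \<rho>1/2 \<Longrightarrow>
              (\<lambda>n. intM dV1 A1op U n (\<lambda>_. h)) sums integral {-1..0} (\<lambda>s. dV1 (A1op (st_add U (fst h)) s))"
    using intM_main[OF ra1 A1_lin A1_add A1_cont A1_bnd UA] by blast
  obtain \<rho>2 B2 where \<rho>2: "\<rho>2 > 0" "B2 \<ge> 0"
    and ml2: "\<And>n. multilin_rel (Xsp \<times> UNIV) n (intM dV2 A2op U n) (B2 * (2/\<rho>2)^n)"
    and sm2: "\<And>h. h \<in> Xsp \<times> UNIV \<Longrightarrow> ext_norm h < \<rho>2/2 \<Longrightarrow>
              (\<lambda>n. intM dV2 A2op U n (\<lambda>_. h)) sums integral {-1..0} (\<lambda>s. dV2 (A2op (st_add U (fst h)) s))"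
    using intM_main[OF ra2 A2_lin A2_add A2_cont A2_bnd UA] by blast
  define r where "r = min \<rho>1 \<rho>2 / 4"
  have r: "r > 0" "r \<le> \<rho>1 / 4" "r \<le> \<rho>2 / 4" using \<rho>1 \<rho>2 by (auto simp: r_def)
  define C where "C n = Cpoly w U d n + B1 * (2/\<rho>1)^n + B2 * (2/\<rho>2)^n" for n
  have ml: "multilin_rel (Xsp \<times> UNIV) n (Mfun dV1 dV2 w U d n) (C n)" for n
    by (rule multilin_cong[OF multilin_add[OF multilin_add[OF polyM_multilin[OF w] multilin_uminus[OF ml1]] multilin_uminus[OF ml2]]])
       (simp_all add: Mfun_def C_def)
  have geo: "summable (\<lambda>n. B * (2/\<rho>)^n * r^n)" if "\<rho> > 0" "r \<le> \<rho>/4" for B \<rho>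
  proof -
    have "summable (\<lambda>n. B * (2 * r / \<rho>)^n)"
      by (intro summable_mult summable_geometric) (use that r in \<open>auto simp: field_simps\<close>)
    then show ?thesis by (simp add: power_mult_distrib power_divide mult.assoc)
  qed
  have sC: "summable (\<lambda>n. C n * r^n)"
    unfolding C_def distrib_right
    by (intro summable_add Cpoly_summable geo \<rho>1(1) \<rho>2(1) r)
  have sm: "(\<lambda>n. Mfun dV1 dV2 w U d n (\<lambda>_. h)) sums Jfun dV1 dV2 w (d + snd h) (st_add U (fst h))"
    if h: "h \<in> Xsp \<times> UNIV" "ext_norm h < r" for h
  proof -
    have hA: "st_add U (fst h) \<in> Asp" using h(1) by (intro Asp_add UA Xsp_Asp) auto
    have "(\<lambda>n. polyM w U d n (\<lambda>_. h) - intM dV1 A1op U n (\<lambda>_. h) - intM dV2 A2op U n (\<lambda>_. h)) sums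
       ((d + snd h)^2 * Jw w (st_add U (fst h)) - integral {-1..0} (\<lambda>s. dV1 (A1op (st_add U (fst h)) s))
         - integral {-1..0} (\<lambda>s. dV2 (A2op (st_add U (fst h)) s)))"
      by (intro sums_diff polyM_sums sm1 sm2 h(1)) (use h(2) r in auto)
    then show ?thesis unfolding Mfun_def Jfun_split[OF ra1 ra2 hA] .
  qed
  show ?thesis using r ml sC sm by blast
qed


definition proj :: "st \<Rightarrow> st" where
  "proj H = (case H of (p1,p2,x1,x2,P1,P2) \<Rightarrow> (P1 0, P2 0, x1, x2, P1, P2))"

lemma proj_Xsp: "H \<in> Asp \<Longrightarrow> proj H \<in> Xsp"
  by (cases H) (auto simp: proj_def Asp_def Xsp_def)

lemma proj_lin: "proj (st_add (st_scale a u) (st_scale b v)) = st_add (st_scale a (proj u)) (st_scale b (proj v))"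
  by (cases u; cases v) (simp add: proj_def st_add_def st_scale_def)

lemma le_of_mem6: "(a::real) \<in> {b1,b2,b3,b4,b5,b6} \<Longrightarrow> b1 \<le> c \<Longrightarrow> b2 \<le> c \<Longrightarrow> b3 \<le> c \<Longrightarrow>
  b4 \<le> c \<Longrightarrow> b5 \<le> c \<Longrightarrow> b6 \<le> c \<Longrightarrow> a \<le> c"
  by auto

lemma proj_norm:
  assumes "H \<in> Asp" shows "st_norm (proj H) \<le> st_norm H"
proof -
  obtain p1 p2 x1 x2 P1 P2 where HH: "H = (p1,p2,x1,x2,P1,P2)" by (cases H) auto
  have c: "continuous_on {-1..1} P1" "continuous_on {-1..1} P2" using assms by (auto simp: HH Asp_def)
  have a: "\<bar>P1 0\<bar> \<le> st_norm H" "\<bar>P2 0\<bar> \<le> st_norm H" "\<bar>x1\<bar> \<le> st_norm H" "\<bar>x2\<bar> \<le> st_norm H"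
    unfolding HH by (rule st_norm_ge(5)[OF c], simp, rule st_norm_ge(6)[OF c], simp, rule st_norm_ge(3)[OF c], rule st_norm_ge(4)[OF c])
  let ?A = "{\<bar>p1\<bar>, \<bar>p2\<bar>, \<bar>x1\<bar>, \<bar>x2\<bar>,
          Sup ((\<lambda>s. \<bar>P1 s\<bar>) ` {-1..1}), Sup ((\<lambda>s. \<bar>P2 s\<bar>) ` {-1..1::real})}"
  have M: "a \<in> ?A \<Longrightarrow> a \<le> st_norm H" for a
    unfolding HH st_norm_def by (simp only: prod.case) (rule Max.coboundedI, simp_all)
  have b: "Sup ((\<lambda>s. \<bar>P1 s\<bar>) ` {-1..1}) \<le> st_norm H" "Sup ((\<lambda>s. \<bar>P2 s\<bar>) ` {-1..1}) \<le> st_norm H"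
    by (rule M; simp)+
  have e: "st_norm (proj H) = Max {\<bar>P1 0\<bar>, \<bar>P2 0\<bar>, \<bar>x1\<bar>, \<bar>x2\<bar>,
          Sup ((\<lambda>s. \<bar>P1 s\<bar>) ` {-1..1}), Sup ((\<lambda>s. \<bar>P2 s\<bar>) ` {-1..1::real})}"
    unfolding HH proj_def st_norm_def by (simp only: prod.case)
  show ?thesis unfolding e
    apply (rule Max.boundedI)
      apply (intro finite.intros)
     apply (simp only: insert_not_empty not_False_eq_True)
    by (rule le_of_mem6, assumption, (rule a b)+)
qed

lemma J_proj: "Jfun dV1 dV2 w d (st_add U (proj h)) = Jfun dV1 dV2 w d (st_add U h)"
  by (cases U; cases h) (simp add: Jfun_def proj_def st_add_def)

lemma st_add_zero: "st_add U st_zero = U"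
  by (cases U) (simp add: st_add_def st_zero_def)

lemma st_norm_zero: "st_norm st_zero = 0"
proof -
  have img: "(\<lambda>s. \<bar>(\<lambda>_. 0::real) s\<bar>) ` {-1..1::real} = {\<bar>0\<bar>}" by (rule image_constant[where x = 0]) simp
  show ?thesis unfolding st_norm_def st_zero_def prod.case img
    by (simp only: abs_zero cSup_singleton insert_absorb2 Max_singleton)
qed

lemma zero_Xsp: "st_zero \<in> Xsp"
  by (simp add: st_zero_def Xsp_def)

lemma abs_suminf_le:
  fixes g b :: "nat \<Rightarrow> real"
  assumes "g sums S" "\<And>n. \<bar>g n\<bar> \<le> b n" "summable b"
  shows "\<bar>S\<bar> \<le> suminf b"
proof -
  have sg: "summable (\<lambda>n. norm (g n))"
    by (rule summable_comparison_test[OF _ assms(3)]) (use assms(2) in auto)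
  have "\<bar>S\<bar> = norm (suminf g)" using assms(1) by (simp add: sums_iff)
  also have "\<dots> \<le> (\<Sum>n. norm (g n))" by (rule summable_norm[OF sg])
  also have "\<dots> \<le> suminf b" by (intro suminf_le sg assms(3)) (use assms(2) in auto)
  finally show ?thesis .
qed

lemma frechet_from_series:
  fixes M :: "nat \<Rightarrow> (nat \<Rightarrow> ext) \<Rightarrow> real"
  assumes U: "U \<in> Xsp" and r: "r > 0"
    and ml: "\<And>n. multilin_rel (Xsp \<times> UNIV) n (M n) (C n)"
    and sC: "summable (\<lambda>n. C n * r^n)"
    and sm: "\<And>h. h \<in> Xsp \<times> UNIV \<Longrightarrow> ext_norm h < r \<Longrightarrow>
        (\<lambda>n. M n (\<lambda>_. h)) sums Jfun dV1 dV2 w (d + snd h) (st_add U (fst h))"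
  shows "frechet_rel Asp (Jfun dV1 dV2 w d) U (\<lambda>h. M 1 (\<lambda>_. (proj h, 0)))"
proof -
  let ?Y = "Xsp \<times> (UNIV :: real set)"
  let ?J = "Jfun dV1 dV2 w d"
  let ?h0 = "(st_zero, 0::real)"
  note mp = multilin_parts[OF ml]
  have C0: "C n \<ge> 0" for n by (rule mp(3))
  have M1eq: "M 1 (\<lambda>_. z) = M 1 (v(0 := z))" for z v
    by (rule mp(1)[of 1, rule_format]) simp
  have M0c: "M 0 v = M 0 w" for v w by (rule mp(1)[of 0, rule_format]) simp
  have pY: "(proj h, 0) \<in> ?Y" if "h \<in> Asp" for h using proj_Xsp[OF that] by auto
  have enp: "ext_norm (proj h, 0) = st_norm (proj h)" for h
    by (simp add: ext_norm_def st_norm_nonneg)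
  have h0Y: "?h0 \<in> ?Y" using zero_Xsp by auto
  have en0: "ext_norm ?h0 = 0" by (simp add: ext_norm_def st_norm_zero)
  have Mz: "M n (\<lambda>_. ?h0) = 0" if "n \<ge> 1" for n
  proof -
    have "\<bar>M n (\<lambda>_. ?h0)\<bar> \<le> C n * (\<Prod>i<n. ext_norm ?h0)" using mp(4)[of n "\<lambda>_. ?h0"] h0Y by auto
    also have "\<dots> = 0" using that by (simp add: en0)
    finally show ?thesis by simp
  qed
  have JU: "?J U = M 0 (\<lambda>_. ?h0)"
  proof -
    have "(\<lambda>n. M n (\<lambda>_. ?h0)) sums ?J U" using sm[OF h0Y] r en0 by (simp add: st_add_zero)
    moreover have "(\<lambda>n. M n (\<lambda>_. ?h0)) sums (\<Sum>n\<in>{0}. M n (\<lambda>_. ?h0))"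
      by (rule sums_finite) (use Mz in auto)
    ultimately show ?thesis by (simp add: sums_unique2)
  qed
  define L where "L h = M 1 (\<lambda>_. (proj h, 0))" for h
  have lin: "\<forall>u\<in>Asp. \<forall>v\<in>Asp. \<forall>a b. L (st_add (st_scale a u) (st_scale b v)) = a * L u + b * L v"
  proof (intro ballI allI)
    fix u v a b assume u: "u \<in> Asp" and v: "v \<in> Asp"
    have e: "(proj (st_add (st_scale a u) (st_scale b v)), 0) = ext_add (ext_scale a (proj u, 0)) (ext_scale b (proj v, 0))"
      by (simp add: ext_add_def ext_scale_def proj_lin)
    have "L (st_add (st_scale a u) (st_scale b v)) = M 1 ((\<lambda>_. (proj u, 0))(0 := ext_add (ext_scale a (proj u, 0)) (ext_scale b (proj v, 0))))"
      unfolding L_def e by (rule M1eq)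
    also have "\<dots> = a * M 1 ((\<lambda>_. (proj u, 0))(0 := (proj u, 0))) + b * M 1 ((\<lambda>_. (proj u, 0))(0 := (proj v, 0)))"
      by (rule mp(2)) (use pY[OF u] pY[OF v] in auto)
    also have "\<dots> = a * L u + b * L v" unfolding L_def by (simp only: M1eq[symmetric])
    finally show "L (st_add (st_scale a u) (st_scale b v)) = a * L u + b * L v" .
  qed
  have bnd: "\<bar>L h\<bar> \<le> C 1 * st_norm h" if h: "h \<in> Asp" for h
  proof -
    have "\<bar>L h\<bar> \<le> C 1 * ext_norm (proj h, 0)" unfolding L_def
      using mp(4)[of 1 "\<lambda>_. (proj h, 0)"] pY[OF h] by simp
    also have "\<dots> = C 1 * st_norm (proj h)" by (simp add: enp)
    also have "\<dots> \<le> C 1 * st_norm h" by (intro mult_left_mono proj_norm h C0)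
    finally show ?thesis .
  qed
  define T where "T = (\<Sum>n. C (n + 2) * r^n)"
  have sT: "summable (\<lambda>n. C (n + 2) * r^n)"
  proof -
    have "summable (\<lambda>n. C (n + 2) * r^(n + 2))" using sC summable_iff_shift[of "\<lambda>n. C n * r^n" 2] by simp
    then have s: "summable (\<lambda>n. C (n + 2) * r^(n + 2) / r^2)" by (rule summable_divide)
    have e: "(\<lambda>n. C (n + 2) * r^(n + 2) / r^2) = (\<lambda>n. C (n + 2) * r^n)"
    proof
      fix n show "C (n + 2) * r^(n + 2) / r^2 = C (n + 2) * r^n"
        using r by (simp add: power_add power2_eq_square field_simps)
    qed
    show ?thesis using s unfolding e .
  qed
  have T0: "T \<ge> 0" unfolding T_def by (intro suminf_nonneg sT mult_nonneg_nonneg C0) (use r in auto)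
  have rem: "\<bar>?J (st_add U h) - ?J U - L h\<bar> \<le> st_norm (proj h)^2 * T"
    if h: "h \<in> Asp" "st_norm h < r" for h
  proof -
    define x where "x = st_norm (proj h)"
    have x: "0 \<le> x" "x < r" using proj_norm[OF h(1)] h(2) st_norm_nonneg by (auto simp: x_def)
    let ?hh = "(proj h, 0::real)"
    have s1: "(\<lambda>n. M n (\<lambda>_. ?hh)) sums ?J (st_add U h)"
      using sm[OF pY[OF h(1)]] x by (simp add: enp x_def J_proj)
    have s2: "(\<lambda>n. M (n + 2) (\<lambda>_. ?hh)) sums (?J (st_add U h) - ?J U - L h)"
    proof -
      from sums_split_initial_segment[OF s1, of 2]
      have "(\<lambda>n. M (n + 2) (\<lambda>_. ?hh)) sums (?J (st_add U h) - (M 0 (\<lambda>_. ?hh) + M 1 (\<lambda>_. ?hh)))"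
        by (simp add: numeral_2_eq_2)
      moreover have "M 0 (\<lambda>_. ?hh) = ?J U" unfolding JU by (rule M0c)
      ultimately show ?thesis by (simp add: L_def algebra_simps)
    qed
    have "\<bar>?J (st_add U h) - ?J U - L h\<bar> \<le> (\<Sum>n. x^2 * (C (n + 2) * r^n))"
    proof (rule abs_suminf_le[OF s2])
      fix n
      have "\<bar>M (n + 2) (\<lambda>_. ?hh)\<bar> \<le> C (n + 2) * (\<Prod>i<n+2. ext_norm ?hh)"
        using mp(4)[of "n+2" "\<lambda>_. ?hh"] pY[OF h(1)] by auto
      also have "\<dots> = C (n + 2) * (x^2 * x^n)" by (simp add: enp x_def power_add power2_eq_square mult.commute)
      also have "\<dots> \<le> C (n + 2) * (x^2 * r^n)"
        by (intro mult_left_mono C0 power_mono) (use x in auto)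
      finally show "\<bar>M (n + 2) (\<lambda>_. ?hh)\<bar> \<le> x^2 * (C (n + 2) * r^n)" by (simp add: algebra_simps)
    next
      show "summable (\<lambda>n. x^2 * (C (n + 2) * r^n))" by (intro summable_mult sT)
    qed
    also have "\<dots> = x^2 * T" unfolding T_def by (rule suminf_mult[OF sT])
    finally show ?thesis by (simp add: x_def)
  qed
  have small: "\<forall>e>0. \<exists>\<delta>>0. \<forall>h\<in>Asp. st_norm h < \<delta> \<longrightarrow> \<bar>?J (st_add U h) - ?J U - L h\<bar> \<le> e * st_norm h"
  proof (intro allI impI)
    fix e :: real assume e: "e > 0"
    define \<delta> where "\<delta> = min r (e / (T + 1))"
    have \<delta>: "\<delta> > 0" "\<delta> \<le> r" "\<delta> * T \<le> e"
    proof -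
      show "\<delta> > 0" "\<delta> \<le> r" using r e T0 by (auto simp: \<delta>_def)
      have "\<delta> * T \<le> e / (T + 1) * T" by (intro mult_right_mono T0) (auto simp: \<delta>_def)
      also have "\<dots> \<le> e" using e T0 by (simp add: field_simps)
      finally show "\<delta> * T \<le> e" .
    qed
    show "\<exists>\<delta>>0. \<forall>h\<in>Asp. st_norm h < \<delta> \<longrightarrow> \<bar>?J (st_add U h) - ?J U - L h\<bar> \<le> e * st_norm h"
    proof (intro exI[of _ \<delta>] conjI ballI impI)
      fix h assume h: "h \<in> Asp" "st_norm h < \<delta>"
      let ?x = "st_norm (proj h)"
      have x: "0 \<le> ?x" "?x \<le> st_norm h" using proj_norm[OF h(1)] st_norm_nonneg by auto
      have "\<bar>?J (st_add U h) - ?J U - L h\<bar> \<le> ?x^2 * T" using rem h \<delta> by auto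
      also have "\<dots> \<le> st_norm h * (\<delta> * T)"
      proof -
        have "?x^2 \<le> st_norm h * \<delta>" unfolding power2_eq_square
          using x h(2) by (intro mult_mono) auto
        then show ?thesis using T0 by (metis mult.assoc mult_right_mono)
      qed
      also have "\<dots> \<le> st_norm h * e" by (intro mult_left_mono \<delta>(3)) (use x in auto)
      finally show "\<bar>?J (st_add U h) - ?J U - L h\<bar> \<le> e * st_norm h" by (simp add: mult.commute)
    qed (use \<delta> in auto)
  qed
  show ?thesis unfolding frechet_rel_def
    using lin bnd small unfolding L_def by blast
qed


lemma A1_proj: "A1op (proj h) = A1op h"
  by (cases h) (simp add: A1op_def proj_def)
lemma A2_proj: "A2op (proj h) = A2op h"
  by (cases h) (simp add: A2op_def proj_def)
lemma Jw_proj: "Jw w (proj h) = Jw w h"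
  by (cases h) (simp add: Jw_def proj_def)

lemma L_formula:
  "Mfun dV1 dV2 w U c 1 (\<lambda>_. (proj h, 0)) = c^2 * Jw w h
     - integral {-1..0} (\<lambda>s. deriv dV1 (A1op U s) * A1op h s)
     - integral {-1..0} (\<lambda>s. deriv dV2 (A2op U s) * A2op h s)"
  by (simp add: Mfun_def polyM_def pf_def Jf_def intM_def Jw_proj A1_proj A2_proj)

lemma deriv_at0:
  fixes f W :: "real \<Rightarrow> real"
  assumes d: "\<And>r. (f has_real_derivative deriv f r) (at r)"
    and e: "\<And>r. f r = a * r + b * r^2 + W r"
    and W: "((\<lambda>r. W r / r^2) \<longlongrightarrow> 0) (at 0)"
  shows "deriv f 0 = a"
proof -
  have ev: "\<forall>\<^sub>F y in at (0::real). y \<noteq> 0" by (simp add: eventually_at_filter)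
  have l1: "((\<lambda>r. a * r + b * r^2 + W r / r^2 * r^2) \<longlongrightarrow> a * 0 + b * 0^2 + 0 * 0^2) (at 0)"
    by (intro tendsto_intros W)
  have l2: "(f \<longlongrightarrow> f 0) (at 0)" using DERIV_isCont[OF d[of 0]] by (simp add: isCont_def)
  have "\<forall>\<^sub>F x in at 0. a * x + b * x\<^sup>2 + W x / x\<^sup>2 * x\<^sup>2 = f x"
    using ev by eventually_elim (simp add: e)
  from Lim_transform_eventually[OF l1 this] have "(f \<longlongrightarrow> 0) (at 0)" by simp
  then have f0: "f 0 = 0" using l2 tendsto_unique[OF at_neq_bot] by blast
  have l3: "((\<lambda>r. a + b * r + W r / r^2 * r) \<longlongrightarrow> a + b * 0 + 0 * 0) (at 0)"
    by (intro tendsto_intros W)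
  have pt: "a + b * x + W x / x\<^sup>2 * x = (f x - f 0) / (x - 0)" if "x \<noteq> 0" for x
    using that by (simp add: f0 e[of x] field_simps power2_eq_square)
  have "\<forall>\<^sub>F x in at 0. a + b * x + W x / x\<^sup>2 * x = (f x - f 0) / (x - 0)"
    using ev by (rule eventually_mono) (rule pt)
  from Lim_transform_eventually[OF l3 this]
  have "((\<lambda>y. (f y - f 0) / (y - 0)) \<longlongrightarrow> a) (at 0)" by simp
  then have "(f has_real_derivative a) (at 0)" by (simp add: has_field_derivative_iff)
  then show ?thesis using d[of 0] DERIV_unique by blast
qed

lemma refl_int:
  fixes g :: "real \<Rightarrow> real"
  shows "integral {-1..0} (\<lambda>s. g (-1 - s)) = integral {-1..0} g"
proof -
  have "integral {-1..0} (\<lambda>s. g (-1 - s)) = integral {-1..0} ((\<lambda>x. g (-x)) \<circ> (+) 1)"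
  proof (intro arg_cong[where f = "integral {-1..0}"] ext)
    fix s :: real
    have "-1 - s = -(1 + s)" by simp
    then show "g (-1 - s) = ((\<lambda>x. g (-x)) \<circ> (+) 1) s" by (simp only: o_def)
  qed
  also have "\<dots> = integral {-1+1..0+1} (\<lambda>x. g (-x))" by (rule integral_shift_Icc_real)
  also have "\<dots> = integral {- 0..- (-1)} (\<lambda>x. g (-x))" by simp
  also have "\<dots> = integral {-1..0} g" by (rule Henstock_Kurzweil_Integration.integral_reflect_real)
  finally show ?thesis .
qed

lemma shift_int:
  fixes g :: "real \<Rightarrow> real"
  shows "integral {-1..0} (\<lambda>s. g (s + 1)) = integral {0..1} g"
proof -
  have "integral {-1..0} (\<lambda>s. g (s + 1)) = integral {-1..0} (g \<circ> (+) 1)"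
    by (simp add: o_def algebra_simps)
  also have "\<dots> = integral {-1+1..0+1} g" by (rule integral_shift_Icc_real)
  finally show ?thesis by simp
qed


lemma ra_deriv1: "real_analytic f \<Longrightarrow> (f has_real_derivative deriv f y) (at y)"
  using ra_has_deriv[of f 0 y] by simp

lemma ra_deriv_cont: "real_analytic f \<Longrightarrow> continuous_on S (deriv f)"
  using ra_cont[of f S 1] by simp

lemma shift_deriv:
  assumes "C1_deriv P Q" "s \<in> {-1..0::real}"
  shows "((\<lambda>s. P (s + 1)) has_real_derivative Q (s + 1)) (at s within {-1..0})"
proof -
  have d: "(P has_real_derivative Q (s + 1)) (at (s + 1) within {-1..1})"
    using assms unfolding C1_deriv_def by auto
  have d': "(P has_real_derivative Q (s + 1)) (at ((\<lambda>s. s + 1) s) within ((\<lambda>s. s + 1) ` {-1..0}))"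
    by (rule DERIV_subset[OF d]) auto
  have g: "((\<lambda>s. s + 1) has_real_derivative 1) (at s within {-1..0})"
    by (auto intro!: derivative_eq_intros)
  from DERIV_image_chain[OF d' g] show ?thesis by (simp add: o_def)
qed

lemma plain_deriv:
  assumes "C1_deriv P Q" "s \<in> {-1..0::real}"
  shows "(P has_real_derivative Q s) (at s within {-1..0})"
proof -
  have d: "(P has_real_derivative Q s) (at s within {-1..1})"
    using assms unfolding C1_deriv_def by auto
  show ?thesis by (rule DERIV_subset[OF d]) auto
qed

lemma conservation:
  assumes ra1: "real_analytic dV1" and ra2: "real_analytic dV2" and w: "w > 0" and c: "c \<noteq> 0"
    and U: "(p1,p2,x1,x2,P1,P2) \<in> Xsp" and D1: "C1_deriv P1 Q1" and D2: "C1_deriv P2 Q2"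
  shows "c^2 * Jw w (Fvf dV1 dV2 w c (p1,p2,x1,x2,P1,P2) Q1 Q2)
     - integral {-1..0} (\<lambda>s. deriv dV1 (A1op (p1,p2,x1,x2,P1,P2) s) * A1op (Fvf dV1 dV2 w c (p1,p2,x1,x2,P1,P2) Q1 Q2) s)
     - integral {-1..0} (\<lambda>s. deriv dV2 (A2op (p1,p2,x1,x2,P1,P2) s) * A2op (Fvf dV1 dV2 w c (p1,p2,x1,x2,P1,P2) Q1 Q2) s) = 0"
proof -
  have p: "P1 0 = p1" "P2 0 = p2" and cP: "continuous_on {-1..1} P1" "continuous_on {-1..1} P2"
    using U by (auto simp: Xsp_def)
  have cQ: "continuous_on {-1..1} Q1" "continuous_on {-1..1} Q2" using D1 D2 by (auto simp: C1_deriv_def)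
  define G where "G s = dV1 (P2 (s + 1) - P1 s) + dV2 (P1 (s + 1) - P2 s)" for s
  define g1 where "g1 s = deriv dV1 (P2 (s + 1) - P1 s) * (Q2 (s + 1) - Q1 s)" for s
  define g2 where "g2 s = deriv dV2 (P1 (s + 1) - P2 s) * (Q1 (s + 1) - Q2 s)" for s
  have dG: "(G has_vector_derivative (g1 s + g2 s)) (at s within {-1..0})" if s: "s \<in> {-1..0}" for s
  proof -
    have a1: "((\<lambda>s. P2 (s + 1) - P1 s) has_real_derivative (Q2 (s + 1) - Q1 s)) (at s within {-1..0})"
      by (intro DERIV_diff shift_deriv plain_deriv D1 D2 s)
    have a2: "((\<lambda>s. P1 (s + 1) - P2 s) has_real_derivative (Q1 (s + 1) - Q2 s)) (at s within {-1..0})"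
      by (intro DERIV_diff shift_deriv plain_deriv D1 D2 s)
    have b1: "((\<lambda>s. dV1 (P2 (s + 1) - P1 s)) has_real_derivative g1 s) (at s within {-1..0})"
      unfolding g1_def by (rule DERIV_chain2[OF ra_deriv1[OF ra1] a1])
    have b2: "((\<lambda>s. dV2 (P1 (s + 1) - P2 s)) has_real_derivative g2 s) (at s within {-1..0})"
      unfolding g2_def by (rule DERIV_chain2[OF ra_deriv1[OF ra2] a2])
    have "(G has_real_derivative (g1 s + g2 s)) (at s within {-1..0})"
      unfolding G_def by (rule DERIV_add[OF b1 b2])
    then show ?thesis by (simp add: has_real_derivative_iff_has_vector_derivative)
  qed
  have ftc: "((\<lambda>s. g1 s + g2 s) has_integral (G 0 - G (-1))) {-1..0}"
    by (rule fundamental_theorem_of_calculus) (use dG in auto)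
  have cs: "continuous_on {-1..0} (\<lambda>s. P2 (s + 1) - P1 s)" "continuous_on {-1..0} (\<lambda>s. P1 (s + 1) - P2 s)"
    "continuous_on {-1..0} (\<lambda>s. Q2 (s + 1) - Q1 s)" "continuous_on {-1..0} (\<lambda>s. Q1 (s + 1) - Q2 s)"
    by (intro continuous_on_diff shift_cont cP cQ)+
  have i1: "g1 integrable_on {-1..0}" unfolding g1_def
    by (intro int_cont continuous_intros continuous_on_compose2[OF ra_deriv_cont[OF ra1, of UNIV] cs(1)] cs(3)) auto
  have i2: "g2 integrable_on {-1..0}" unfolding g2_def
    by (intro int_cont continuous_intros continuous_on_compose2[OF ra_deriv_cont[OF ra2, of UNIV] cs(2)] cs(4)) auto
  have "integral {-1..0} g1 + integral {-1..0} g2 = G 0 - G (-1)"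
    using ftc Henstock_Kurzweil_Integration.integral_add[OF i1 i2] by (simp add: integral_unique)
  moreover have "c^2 * Jw w (Fvf dV1 dV2 w c (p1,p2,x1,x2,P1,P2) Q1 Q2) = G 0 - G (-1)"
    using c w by (simp add: Jw_def Fvf_def G_def p field_simps)
  moreover have "integral {-1..0} (\<lambda>s. deriv dV1 (A1op (p1,p2,x1,x2,P1,P2) s) * A1op (Fvf dV1 dV2 w c (p1,p2,x1,x2,P1,P2) Q1 Q2) s) = integral {-1..0} g1"
    by (simp add: A1op_def Fvf_def g1_def[abs_def])
  moreover have "integral {-1..0} (\<lambda>s. deriv dV2 (A2op (p1,p2,x1,x2,P1,P2) s) * A2op (Fvf dV1 dV2 w c (p1,p2,x1,x2,P1,P2) Q1 Q2) s) = integral {-1..0} g2"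
    by (simp add: A2op_def Fvf_def g2_def[abs_def])
  ultimately show ?thesis by linarith
qed


lemma zero_formula:
  assumes d1: "deriv dV1 0 = 1" and d2: "deriv dV2 0 = \<kappa>" and h: "(p1,p2,x1,x2,P1,P2) \<in> Xsp"
  shows "Mfun dV1 dV2 w st_zero c 1 (\<lambda>_. (proj (p1,p2,x1,x2,P1,P2), 0)) = c^2 * x1 + c^2 / w * x2
               + integral {-1..0} (\<lambda>s. P1 s + \<kappa> * P2 s)
               - integral {0..1} (\<lambda>s. \<kappa> * P1 s + P2 s)"
proof -
  have cP: "continuous_on {-1..1} P1" "continuous_on {-1..1} P2" using h by (auto simp: Xsp_def)
  have im: "P1 integrable_on {-1..0}" "P2 integrable_on {-1..0}"
    by (intro int_cont shift_cont(2) cP)+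
  have ip: "P1 integrable_on {0..1}" "P2 integrable_on {0..1}"
    by (intro integrable_continuous_interval continuous_on_subset[OF cP(1)] continuous_on_subset[OF cP(2)]; auto)+
  have ish: "(\<lambda>s. P1 (s + 1)) integrable_on {-1..0}" "(\<lambda>s. P2 (s + 1)) integrable_on {-1..0}"
    by (intro int_cont shift_cont(1) cP)+
  have Ia: "integral {-1..0} (\<lambda>s. deriv dV1 (A1op st_zero s) * A1op (p1,p2,x1,x2,P1,P2) s)
      = integral {0..1} P2 - integral {-1..0} P1"
  proof -
    have "integral {-1..0} (\<lambda>s. deriv dV1 (A1op st_zero s) * A1op (p1,p2,x1,x2,P1,P2) s)
        = integral {-1..0} (\<lambda>s. P2 (s + 1) - P1 s)"
      by (simp add: A1op_def st_zero_def d1)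
    also have "\<dots> = integral {-1..0} (\<lambda>s. P2 (s + 1)) - integral {-1..0} P1"
      by (rule integral_diff[OF ish(2) im(1)])
    finally show ?thesis by (simp add: shift_int)
  qed
  have Ib: "integral {-1..0} (\<lambda>s. deriv dV2 (A2op st_zero s) * A2op (p1,p2,x1,x2,P1,P2) s)
      = \<kappa> * (integral {0..1} P1 - integral {-1..0} P2)"
  proof -
    have "integral {-1..0} (\<lambda>s. deriv dV2 (A2op st_zero s) * A2op (p1,p2,x1,x2,P1,P2) s)
        = \<kappa> * integral {-1..0} (\<lambda>s. P1 (s + 1) - P2 s)"
      by (simp add: A2op_def st_zero_def d2)
    also have "integral {-1..0} (\<lambda>s. P1 (s + 1) - P2 s) = integral {-1..0} (\<lambda>s. P1 (s + 1)) - integral {-1..0} P2"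
      by (rule integral_diff[OF ish(1) im(2)])
    finally show ?thesis by (simp add: shift_int)
  qed
  have Ic: "integral {-1..0} (\<lambda>s. P1 s + \<kappa> * P2 s) = integral {-1..0} P1 + \<kappa> * integral {-1..0} P2"
    using Henstock_Kurzweil_Integration.integral_add[OF im(1) integrable_on_cmult_left[OF im(2), of \<kappa>]] by simp
  have Id: "integral {0..1} (\<lambda>s. \<kappa> * P1 s + P2 s) = \<kappa> * integral {0..1} P1 + integral {0..1} P2"
    using Henstock_Kurzweil_Integration.integral_add[OF integrable_on_cmult_left[OF ip(1), of \<kappa>] ip(2)] by simp
  show ?thesis unfolding L_formula Ia Ib Ic Id
    by (simp add: Jw_def algebra_simps add_divide_distrib)
qed

theorem proposition3p10:
  fixes w \<kappa> \<beta> c :: real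
    and V1 V2 dV1 dV2 W1 W2 :: "real \<Rightarrow> real"
  assumes "w > 0" and "\<kappa> > 0" and "c \<noteq> 0"
    and "real_analytic V1" and "real_analytic V2"
    and "\<And>r. (V1 has_real_derivative dV1 r) (at r)"
    and "\<And>r. (V2 has_real_derivative dV2 r) (at r)"
    and "\<And>r. dV1 r = r + r^2 + W1 r"
    and "\<And>r. dV2 r = \<kappa> * r + \<beta> * r^2 + W2 r"
    and "((\<lambda>r. W1 r / r^2) \<longlongrightarrow> 0) (at 0)"
    and "((\<lambda>r. W2 r / r^2) \<longlongrightarrow> 0) (at 0)"
  shows
    \<comment> \<open>(i)\<close>
    "analytic_rel (Xsp \<times> UNIV) (\<lambda>(U, d). Jfun dV1 dV2 w d U) (Xsp \<times> UNIV)
     \<and> (\<forall>p1 p2 x1 x2 P1 P2 Q1 Q2. (p1,p2,x1,x2,P1,P2) \<in> Dsp \<and> C1_deriv P1 Q1 \<and> C1_deriv P2 Q2 \<longrightarrow>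
          (\<exists>L. frechet_rel Asp (Jfun dV1 dV2 w c) (p1,p2,x1,x2,P1,P2) L \<and>
               L (Fvf dV1 dV2 w c (p1,p2,x1,x2,P1,P2) Q1 Q2) = 0))
     \<comment> \<open>(ii)\<close>
     \<and> (\<exists>L. frechet_rel Asp (Jfun dV1 dV2 w c) st_zero L \<and>
          (\<forall>p1 p2 x1 x2 P1 P2. (p1,p2,x1,x2,P1,P2) \<in> Xsp \<longrightarrow>
             L (p1,p2,x1,x2,P1,P2) = c^2 * x1 + c^2 / w * x2
               + integral {-1..0} (\<lambda>s. P1 s + \<kappa> * P2 s)
               - integral {0..1} (\<lambda>s. \<kappa> * P1 s + P2 s)))
     \<comment> \<open>(iii)\<close>
     \<and> (V1 = V2 \<longrightarrow> (\<forall>U\<in>Xsp. Jfun dV1 dV2 w c (SM U) = Jfun dV1 dV2 w c U))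
     \<and> (w = 1 \<longrightarrow> (\<forall>U\<in>Xsp. Jfun dV1 dV2 1 c (SK U) = Jfun dV1 dV2 1 c U))
     \<comment> \<open>(iv)\<close>
     \<and> (\<forall>U\<in>Xsp. \<forall>\<mu>::real. Jfun dV1 dV2 w c (st_add U (st_scale \<mu> chi0)) = Jfun dV1 dV2 w c U)
     \<comment> \<open>(v)\<close>
     \<and> bounded_linear_rel Xsp (Jw w)
     \<and> (\<forall>U\<in>Xsp. \<forall>c'::real. Jfun dV1 dV2 w c U - Jfun dV1 dV2 w c' U = (c^2 - c'^2) * Jw w U)"
proof -
  note w = assms(1) and c = assms(3)
  have ra1: "real_analytic dV1" by (rule real_analytic_deriv[OF assms(4) assms(6)])
  have ra2: "real_analytic dV2" by (rule real_analytic_deriv[OF assms(5) assms(7)])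
  have P1: "analytic_rel (Xsp \<times> UNIV) (\<lambda>(U, d). Jfun dV1 dV2 w d U) (Xsp \<times> UNIV)"
    unfolding analytic_rel_def
  proof
    fix x :: ext assume x: "x \<in> Xsp \<times> UNIV"
    obtain U d where xx: "x = (U, d)" by (cases x)
    have U: "U \<in> Xsp" using x xx by auto
    obtain r C where r: "r > 0" and ml: "\<forall>n. multilin_rel (Xsp \<times> UNIV) n (Mfun dV1 dV2 w U d n) (C n)"
      and sC: "summable (\<lambda>n. C n * r^n)"
      and sm: "\<forall>h\<in>Xsp \<times> UNIV. ext_norm h < r \<longrightarrow>
        (\<lambda>n. Mfun dV1 dV2 w U d n (\<lambda>_. h)) sums Jfun dV1 dV2 w (d + snd h) (st_add U (fst h))"
      using J_analytic_at[OF ra1 ra2 w U, of d] by blast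
    have "\<forall>h\<in>Xsp \<times> UNIV. ext_norm h < r \<longrightarrow>
        (\<lambda>n. Mfun dV1 dV2 w U d n (\<lambda>_. h)) sums (\<lambda>(U, d). Jfun dV1 dV2 w d U) (ext_add x h)"
      using sm by (simp add: xx ext_add_def)
    then show "\<exists>r>0. \<exists>M C. (\<forall>n. multilin_rel (Xsp \<times> UNIV) n (M n) (C n)) \<and> summable (\<lambda>n. C n * r ^ n) \<and>
        (\<forall>h\<in>Xsp \<times> UNIV. ext_norm h < r \<longrightarrow> (\<lambda>n. M n (\<lambda>_. h)) sums (\<lambda>(U, d). Jfun dV1 dV2 w d U) (ext_add x h))"
      using r ml sC by blast
  qed
  have FR: "frechet_rel Asp (Jfun dV1 dV2 w c) U (\<lambda>h. Mfun dV1 dV2 w U c 1 (\<lambda>_. (proj h, 0)))"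
    if U: "U \<in> Xsp" for U
  proof -
    obtain r C where r: "r > 0" and ml: "\<forall>n. multilin_rel (Xsp \<times> UNIV) n (Mfun dV1 dV2 w U c n) (C n)"
      and sC: "summable (\<lambda>n. C n * r^n)"
      and sm: "\<forall>h\<in>Xsp \<times> UNIV. ext_norm h < r \<longrightarrow>
        (\<lambda>n. Mfun dV1 dV2 w U c n (\<lambda>_. h)) sums Jfun dV1 dV2 w (c + snd h) (st_add U (fst h))"
      using J_analytic_at[OF ra1 ra2 w U, of c] by blast
    show ?thesis by (rule frechet_from_series[OF U r]) (use ml sC sm in auto)
  qed
  have P2: "\<forall>p1 p2 x1 x2 P1 P2 Q1 Q2. (p1,p2,x1,x2,P1,P2) \<in> Dsp \<and> C1_deriv P1 Q1 \<and> C1_deriv P2 Q2 \<longrightarrow>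
          (\<exists>L. frechet_rel Asp (Jfun dV1 dV2 w c) (p1,p2,x1,x2,P1,P2) L \<and>
               L (Fvf dV1 dV2 w c (p1,p2,x1,x2,P1,P2) Q1 Q2) = 0)"
  proof (intro allI impI)
    fix p1 p2 x1 x2 P1 P2 Q1 Q2
    assume a: "(p1,p2,x1,x2,P1,P2) \<in> Dsp \<and> C1_deriv P1 Q1 \<and> C1_deriv P2 Q2"
    have U: "(p1,p2,x1,x2,P1,P2) \<in> Xsp" using a by (simp add: Dsp_def)
    show "\<exists>L. frechet_rel Asp (Jfun dV1 dV2 w c) (p1,p2,x1,x2,P1,P2) L \<and>
               L (Fvf dV1 dV2 w c (p1,p2,x1,x2,P1,P2) Q1 Q2) = 0"
      using FR[OF U] conservation[OF ra1 ra2 w c U, of Q1 Q2] a unfolding L_formula by blast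
  qed
  have d1: "deriv dV1 0 = 1"
    by (rule deriv_at0[where b = 1 and W = W1]) (use ra_deriv1[OF ra1] assms(8) assms(10) in auto)
  have d2: "deriv dV2 0 = \<kappa>"
    by (rule deriv_at0[where b = \<beta> and W = W2]) (use ra_deriv1[OF ra2] assms(9) assms(11) in auto)
  have P3: "\<exists>L. frechet_rel Asp (Jfun dV1 dV2 w c) st_zero L \<and>
          (\<forall>p1 p2 x1 x2 P1 P2. (p1,p2,x1,x2,P1,P2) \<in> Xsp \<longrightarrow>
             L (p1,p2,x1,x2,P1,P2) = c^2 * x1 + c^2 / w * x2
               + integral {-1..0} (\<lambda>s. P1 s + \<kappa> * P2 s)
               - integral {0..1} (\<lambda>s. \<kappa> * P1 s + P2 s))"
    using FR[OF zero_Xsp] zero_formula[OF d1 d2] by blast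
  have eqd: "dV1 = dV2" if "V1 = V2"
  proof
    fix r show "dV1 r = dV2 r" using assms(6)[of r] assms(7)[of r] that DERIV_unique by blast
  qed
  have P4: "V1 = V2 \<longrightarrow> (\<forall>U\<in>Xsp. Jfun dV1 dV2 w c (SM U) = Jfun dV1 dV2 w c U)"
  proof (intro impI ballI)
    fix U assume V: "V1 = V2" and U: "U \<in> Xsp"
    obtain p1 p2 x1 x2 P1 P2 where UU: "U = (p1,p2,x1,x2,P1,P2)" by (cases U) auto
    define g where "g s = dV2 (P2 (s + 1) - P1 s) + dV2 (P1 (s + 1) - P2 s)" for s
    have "integral {-1..0} (\<lambda>s. dV2 (- P2 (- (s + 1)) - - P1 (- s)) + dV2 (- P1 (- (s + 1)) - - P2 (- s)))
        = integral {-1..0} (\<lambda>s. g (-1 - s))"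
    proof -
      have m: "\<And>s::real. -1 - s = -s - 1" by simp
      show ?thesis by (simp add: g_def algebra_simps m)
    qed
    also have "\<dots> = integral {-1..0} g" by (rule refl_int)
    finally show "Jfun dV1 dV2 w c (SM U) = Jfun dV1 dV2 w c U"
      unfolding eqd[OF V] UU by (simp add: Jfun_def SM_def g_def[abs_def])
  qed
  have P5: "w = 1 \<longrightarrow> (\<forall>U\<in>Xsp. Jfun dV1 dV2 1 c (SK U) = Jfun dV1 dV2 1 c U)"
  proof (intro impI ballI)
    fix U assume U: "U \<in> Xsp"
    obtain p1 p2 x1 x2 P1 P2 where UU: "U = (p1,p2,x1,x2,P1,P2)" by (cases U) auto
    define g where "g s = dV1 (P2 (s + 1) - P1 s) + dV2 (P1 (s + 1) - P2 s)" for s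
    have "integral {-1..0} (\<lambda>s. dV1 (- P1 (- (s + 1)) - - P2 (- s)) + dV2 (- P2 (- (s + 1)) - - P1 (- s)))
        = integral {-1..0} (\<lambda>s. g (-1 - s))"
    proof -
      have m: "\<And>s::real. -1 - s = -s - 1" by simp
      show ?thesis by (simp add: g_def algebra_simps m)
    qed
    also have "\<dots> = integral {-1..0} g" by (rule refl_int)
    finally show "Jfun dV1 dV2 1 c (SK U) = Jfun dV1 dV2 1 c U"
      unfolding UU by (simp add: Jfun_def SK_def g_def[abs_def] add.commute)
  qed
  have P6: "\<forall>U\<in>Xsp. \<forall>\<mu>::real. Jfun dV1 dV2 w c (st_add U (st_scale \<mu> chi0)) = Jfun dV1 dV2 w c U"
  proof (intro ballI allI)
    fix U \<mu> assume "U \<in> Xsp"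
    show "Jfun dV1 dV2 w c (st_add U (st_scale \<mu> chi0)) = Jfun dV1 dV2 w c U"
      by (cases U) (simp add: Jfun_def st_add_def st_scale_def chi0_def)
  qed
  have P7: "bounded_linear_rel Xsp (Jw w)"
    unfolding bounded_linear_rel_def
  proof (intro conjI ballI allI exI)
    fix u v a b show "Jw w (st_add (st_scale a u) (st_scale b v)) = a * Jw w u + b * Jw w v" by (rule Jw_lin)
  next
    fix h assume "h \<in> Xsp"
    then show "\<bar>Jw w h\<bar> \<le> (1 + 1/w) * st_norm h" by (intro Jw_bound w Xsp_Asp)
  qed
  have P8: "\<forall>U\<in>Xsp. \<forall>c'::real. Jfun dV1 dV2 w c U - Jfun dV1 dV2 w c' U = (c^2 - c'^2) * Jw w U"
  proof (intro ballI allI)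
    fix U c' show "Jfun dV1 dV2 w c U - Jfun dV1 dV2 w c' U = (c^2 - c'^2) * Jw w U"
      by (cases U) (simp add: Jfun_def Jw_def algebra_simps)
  qed
  show ?thesis using P1 P2 P3 P4 P5 P6 P7 P8 by blast
qed


end
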